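(* Assume $X$ is a semimartingale and that (1) $\mathbf 1_{\Gamma^-}*\nu^X\equiv0$, where $\Gamma^-:=\{(\omega,t,x): t<\tau,\ X_{t-}=b(t),\ x<0\}$; (2) $\mathbf 1_{\Gamma_+}*\nu^X\equiv0$, where $\Gamma_+:=\{(\omega,t,x): X_{t-}=b(t),\ x>0\}$; (3) $\mathbf 1_{\Gamma_0}*\nu^X\equiv0$, where $\Gamma_0:=\{(\omega,t,x): X_{t-}<b(t),\ x=b(t)-X_{t-}\}$. Then the no-premature-left-contact condition (for every finite $t\ge0$, $\sup_{0\le s\le t}Y_s<0$ on $\{\tau>t\}$) holds a.s., $\mathbb P(C_+)=0$, $\mathbb P(J_0)=0$, and $\{\tau<\infty\}=C_0\,\dot\cup\,J_+$ almost surely. If in addition $X$ has no jumps at predictable times (i.e. $\mathbb P(\Delta X_\sigma\neq0,\sigma<\infty)=0$ for every predictable stopping time $\sigma$), then $\tau_L$ is predictable and $\mathbb P(\{\tau=\sigma<\infty\}\cap J_+)=0$ for every predictable stopping time $\sigma$.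
   Context: Let $(\Omega,\mathcal F,\mathbb F=(\mathcal F_t)_{t\ge0},\mathbb P)$ be a filtered probability space satisfying the usual conditions. Let $X$ be a real-valued $\mathbb F$-semimartingale (càdlàg) and $b:[0,\infty)\to\mathbb R$ a continuous deterministic function, with $X_0<b(0)$ identically. $X_{t-}$ denotes the left limit and $\Delta X_t=X_t-X_{t-}$. Let $\mu^X$ be the jump measure of $X$ and $\nu^X$ its predictable compensator; $(W*\nu)_t:=\int_0^t\int_{\mathbb R}W(s,x)\,\nu(ds,dx)$ and "$\equiv0$" means identically zero up to evanescence. Set $Y_t:=X_t-b(t)$, $\tau:=\inf\{t\ge0:Y_t\ge0\}$ ($\inf\emptyset=\infty$), $L:=\{\tau<\infty,Y_{\tau-}=0\}$, $C_0:=\{\tau<\infty,Y_{\tau-}=0,Y_\tau=0\}$, $C_+:=\{\tau<\infty,Y_{\tau-}=0,Y_\tau>0\}$, $J_0:=\{\tau<\infty,Y_{\tau-}<0,Y_\tau=0\}$, $J_+:=\{\tau<\infty,Y_{\tau-}<0,Y_\tau>0\}$; $\tau_L:=\tau$ on $L$, $\tau_L:=\infty$ otherwise. *)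

theory Defs
  imports "HOL-Probability.Probability"
begin

definition usual_filtration :: "'a measure \<Rightarrow> (real \<Rightarrow> 'a measure) \<Rightarrow> bool" where
  "usual_filtration M F \<longleftrightarrow> prob_space M \<and> complete_measure M \<and>
     (\<forall>t\<ge>0. space (F t) = space M \<and> sets (F t) \<subseteq> sets M) \<and>
     (\<forall>s t. 0 \<le> s \<and> s \<le> t \<longrightarrow> sets (F s) \<subseteq> sets (F t)) \<and>
     null_sets M \<subseteq> sets (F 0) \<and>
     (\<forall>t\<ge>0. sets (F t) = (\<Inter>s\<in>{t<..}. sets (F s)))"

definition adapted :: "'a measure \<Rightarrow> (real \<Rightarrow> 'a measure) \<Rightarrow> (real \<Rightarrow> 'a \<Rightarrow> real) \<Rightarrow> bool" where
  "adapted M F X \<longleftrightarrow> (\<forall>t\<ge>0. X t \<in> borel_measurable (F t))"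

definition cadlag :: "(real \<Rightarrow> real) \<Rightarrow> bool" where
  "cadlag f \<longleftrightarrow> (\<forall>t\<ge>0. continuous (at_right t) f) \<and> (\<forall>t>0. \<exists>l. (f \<longlongrightarrow> l) (at_left t))"

definition cadlag_process :: "'a measure \<Rightarrow> (real \<Rightarrow> 'a \<Rightarrow> real) \<Rightarrow> bool" where
  "cadlag_process M X \<longleftrightarrow> (\<forall>\<omega>\<in>space M. cadlag (\<lambda>t. X t \<omega>))"

definition left_lim :: "(real \<Rightarrow> real) \<Rightarrow> real \<Rightarrow> real" where
  "left_lim f t = (if t \<le> 0 then f 0 else Lim (at_left t) f)"

definition jump :: "(real \<Rightarrow> real) \<Rightarrow> real \<Rightarrow> real" where
  "jump f t = f t - left_lim f t"

definition stopping_time_e :: "'a measure \<Rightarrow> (real \<Rightarrow> 'a measure) \<Rightarrow> ('a \<Rightarrow> ereal) \<Rightarrow> bool" where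
  "stopping_time_e M F T \<longleftrightarrow> (\<forall>\<omega>\<in>space M. 0 \<le> T \<omega>) \<and>
     (\<forall>t\<ge>0. {\<omega>\<in>space M. T \<omega> \<le> ereal t} \<in> sets (F t))"

definition predictable_sigma :: "'a measure \<Rightarrow> (real \<Rightarrow> 'a measure) \<Rightarrow> ('a \<times> real) measure" where
  "predictable_sigma M F = sigma (space M \<times> {0..})
     ({A \<times> {0} | A. A \<in> sets (F 0)} \<union>
      {A \<times> {s<..t} | A s t. 0 \<le> s \<and> s < t \<and> A \<in> sets (F s)})"

definition predictable_time :: "'a measure \<Rightarrow> (real \<Rightarrow> 'a measure) \<Rightarrow> ('a \<Rightarrow> ereal) \<Rightarrow> bool" where
  "predictable_time M F T \<longleftrightarrow> stopping_time_e M F T \<and>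
     {(\<omega>, t). \<omega> \<in> space M \<and> 0 \<le> t \<and> T \<omega> \<le> ereal t} \<in> sets (predictable_sigma M F)"

definition martingale :: "'a measure \<Rightarrow> (real \<Rightarrow> 'a measure) \<Rightarrow> (real \<Rightarrow> 'a \<Rightarrow> real) \<Rightarrow> bool" where
  "martingale M F X \<longleftrightarrow> adapted M F X \<and> (\<forall>t\<ge>0. integrable M (X t)) \<and>
     (\<forall>s t. 0 \<le> s \<and> s \<le> t \<longrightarrow> (AE \<omega> in M. real_cond_exp M (F s) (X t) \<omega> = X s \<omega>))"

definition stopped :: "(real \<Rightarrow> 'a \<Rightarrow> real) \<Rightarrow> ('a \<Rightarrow> ereal) \<Rightarrow> real \<Rightarrow> 'a \<Rightarrow> real" where
  "stopped X T = (\<lambda>t \<omega>. X (real_of_ereal (min (ereal t) (T \<omega>))) \<omega>)"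

definition local_martingale :: "'a measure \<Rightarrow> (real \<Rightarrow> 'a measure) \<Rightarrow> (real \<Rightarrow> 'a \<Rightarrow> real) \<Rightarrow> bool" where
  "local_martingale M F X \<longleftrightarrow> adapted M F X \<and> cadlag_process M X \<and>
     (\<exists>T :: nat \<Rightarrow> 'a \<Rightarrow> ereal. (\<forall>n. stopping_time_e M F (T n)) \<and>
        (\<forall>n. \<forall>\<omega>\<in>space M. T n \<omega> \<le> T (Suc n) \<omega>) \<and>
        (AE \<omega> in M. (\<lambda>n. T n \<omega>) \<longlonglongrightarrow> \<infinity>) \<and>
        (\<forall>n. martingale M F (stopped X (T n))))"

definition finite_variation_on :: "(real \<Rightarrow> real) \<Rightarrow> real \<Rightarrow> real \<Rightarrow> bool" where
  "finite_variation_on f a b \<longleftrightarrow> (\<exists>B. \<forall>(n::nat) (p::nat \<Rightarrow> real).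
      p 0 = a \<and> p n = b \<and> mono_on {..n} p \<longrightarrow> (\<Sum>i<n. \<bar>f (p (Suc i)) - f (p i)\<bar>) \<le> B)"

definition semimartingale :: "'a measure \<Rightarrow> (real \<Rightarrow> 'a measure) \<Rightarrow> (real \<Rightarrow> 'a \<Rightarrow> real) \<Rightarrow> bool" where
  "semimartingale M F X \<longleftrightarrow> adapted M F X \<and> cadlag_process M X \<and>
     (\<exists>L A. local_martingale M F L \<and> (\<forall>\<omega>\<in>space M. L 0 \<omega> = 0) \<and>
        adapted M F A \<and> cadlag_process M A \<and>
        (\<forall>\<omega>\<in>space M. A 0 \<omega> = 0 \<and> (\<forall>t\<ge>0. finite_variation_on (\<lambda>s. A s \<omega>) 0 t)) \<and>
        (AE \<omega> in M. \<forall>t\<ge>0. X t \<omega> = X 0 \<omega> + L t \<omega> + A t \<omega>))"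

text \<open>\<mu>^X(\<omega>; dt, dx) = sum over s > 0 with \<Delta>X_s \<noteq> 0 of the Dirac mass at (s, \<Delta>X_s).\<close>
definition jump_measure :: "(real \<Rightarrow> 'a \<Rightarrow> real) \<Rightarrow> 'a \<Rightarrow> (real \<times> real) measure" where
  "jump_measure X \<omega> = distr (count_space {s. 0 < s \<and> jump (\<lambda>t. X t \<omega>) s \<noteq> 0}) borel
      (\<lambda>s. (s, jump (\<lambda>t. X t \<omega>) s))"

text \<open>\<nu> is a predictable random measure (no mass on {t \<le> 0} or on {x = 0}, and W*\<nu> predictable
  for every nonnegative predictable function W) with E[W*\<mu>^X_\<infinity>] = E[W*\<nu>_\<infinity>] for all such W.\<close>
definition compensator :: "'a measure \<Rightarrow> (real \<Rightarrow> 'a measure) \<Rightarrow> (real \<Rightarrow> 'a \<Rightarrow> real)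
    \<Rightarrow> ('a \<Rightarrow> (real \<times> real) measure) \<Rightarrow> bool" where
  "compensator M F X \<nu> \<longleftrightarrow>
     (\<forall>\<omega>\<in>space M. sets (\<nu> \<omega>) = sets borel \<and>
        emeasure (\<nu> \<omega>) {p. fst p \<le> 0} = 0 \<and> emeasure (\<nu> \<omega>) {p. snd p = 0} = 0) \<and>
     (\<forall>W \<in> borel_measurable (predictable_sigma M F \<Otimes>\<^sub>M borel).
        (\<lambda>(\<omega>, t). \<integral>\<^sup>+ p. indicator {..t} (fst p) * W ((\<omega>, fst p), snd p) \<partial>\<nu> \<omega>)
          \<in> borel_measurable (predictable_sigma M F)) \<and>
     (\<forall>W \<in> borel_measurable (predictable_sigma M F \<Otimes>\<^sub>M borel).
        (\<integral>\<^sup>+ \<omega>. (\<integral>\<^sup>+ p. W ((\<omega>, fst p), snd p) \<partial>jump_measure X \<omega>) \<partial>M) =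
        (\<integral>\<^sup>+ \<omega>. (\<integral>\<^sup>+ p. W ((\<omega>, fst p), snd p) \<partial>\<nu> \<omega>) \<partial>M))"

definition ind_integral :: "('a \<Rightarrow> (real \<times> real) measure) \<Rightarrow> ('a \<Rightarrow> (real \<times> real) set) \<Rightarrow> real \<Rightarrow> 'a \<Rightarrow> ennreal" where
  "ind_integral \<nu> \<Gamma> t \<omega> = (\<integral>\<^sup>+ p. indicator {..t} (fst p) * indicator (\<Gamma> \<omega>) p \<partial>\<nu> \<omega>)"

definition Yp :: "(real \<Rightarrow> 'a \<Rightarrow> real) \<Rightarrow> (real \<Rightarrow> real) \<Rightarrow> real \<Rightarrow> 'a \<Rightarrow> real" where
  "Yp X b t \<omega> = X t \<omega> - b t"

definition hit_time :: "(real \<Rightarrow> 'a \<Rightarrow> real) \<Rightarrow> (real \<Rightarrow> real) \<Rightarrow> 'a \<Rightarrow> ereal" where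
  "hit_time X b \<omega> = Inf {ereal t | t. 0 \<le> t \<and> 0 \<le> Yp X b t \<omega>}"

text \<open>Y_{\<tau>-} and Y_\<tau> (meaningful on {\<tau> < \<infinity>}).\<close>
definition Y_tau_minus :: "(real \<Rightarrow> 'a \<Rightarrow> real) \<Rightarrow> (real \<Rightarrow> real) \<Rightarrow> 'a \<Rightarrow> real" where
  "Y_tau_minus X b \<omega> = left_lim (\<lambda>t. Yp X b t \<omega>) (real_of_ereal (hit_time X b \<omega>))"

definition Y_tau :: "(real \<Rightarrow> 'a \<Rightarrow> real) \<Rightarrow> (real \<Rightarrow> real) \<Rightarrow> 'a \<Rightarrow> real" where
  "Y_tau X b \<omega> = Yp X b (real_of_ereal (hit_time X b \<omega>)) \<omega>"

definition L_set :: "'a measure \<Rightarrow> (real \<Rightarrow> 'a \<Rightarrow> real) \<Rightarrow> (real \<Rightarrow> real) \<Rightarrow> 'a set" where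
  "L_set M X b = {\<omega>\<in>space M. hit_time X b \<omega> < \<infinity> \<and> Y_tau_minus X b \<omega> = 0}"

definition C_zero :: "'a measure \<Rightarrow> (real \<Rightarrow> 'a \<Rightarrow> real) \<Rightarrow> (real \<Rightarrow> real) \<Rightarrow> 'a set" where
  "C_zero M X b = {\<omega>\<in>space M. hit_time X b \<omega> < \<infinity> \<and> Y_tau_minus X b \<omega> = 0 \<and> Y_tau X b \<omega> = 0}"

definition C_plus :: "'a measure \<Rightarrow> (real \<Rightarrow> 'a \<Rightarrow> real) \<Rightarrow> (real \<Rightarrow> real) \<Rightarrow> 'a set" where
  "C_plus M X b = {\<omega>\<in>space M. hit_time X b \<omega> < \<infinity> \<and> Y_tau_minus X b \<omega> = 0 \<and> Y_tau X b \<omega> > 0}"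

definition J_zero :: "'a measure \<Rightarrow> (real \<Rightarrow> 'a \<Rightarrow> real) \<Rightarrow> (real \<Rightarrow> real) \<Rightarrow> 'a set" where
  "J_zero M X b = {\<omega>\<in>space M. hit_time X b \<omega> < \<infinity> \<and> Y_tau_minus X b \<omega> < 0 \<and> Y_tau X b \<omega> = 0}"

definition J_plus :: "'a measure \<Rightarrow> (real \<Rightarrow> 'a \<Rightarrow> real) \<Rightarrow> (real \<Rightarrow> real) \<Rightarrow> 'a set" where
  "J_plus M X b = {\<omega>\<in>space M. hit_time X b \<omega> < \<infinity> \<and> Y_tau_minus X b \<omega> < 0 \<and> Y_tau X b \<omega> > 0}"

definition tau_L :: "'a measure \<Rightarrow> (real \<Rightarrow> 'a \<Rightarrow> real) \<Rightarrow> (real \<Rightarrow> real) \<Rightarrow> 'a \<Rightarrow> ereal" where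
  "tau_L M X b \<omega> = (if \<omega> \<in> L_set M X b then hit_time X b \<omega> else \<infinity>)"

definition Gamma_minus :: "(real \<Rightarrow> 'a \<Rightarrow> real) \<Rightarrow> (real \<Rightarrow> real) \<Rightarrow> 'a \<Rightarrow> (real \<times> real) set" where
  "Gamma_minus X b \<omega> = {(t, x). ereal t < hit_time X b \<omega> \<and> left_lim (\<lambda>s. X s \<omega>) t = b t \<and> x < 0}"

definition Gamma_plus :: "(real \<Rightarrow> 'a \<Rightarrow> real) \<Rightarrow> (real \<Rightarrow> real) \<Rightarrow> 'a \<Rightarrow> (real \<times> real) set" where
  "Gamma_plus X b \<omega> = {(t, x). left_lim (\<lambda>s. X s \<omega>) t = b t \<and> 0 < x}"

definition Gamma_zero :: "(real \<Rightarrow> 'a \<Rightarrow> real) \<Rightarrow> (real \<Rightarrow> real) \<Rightarrow> 'a \<Rightarrow> (real \<times> real) set" where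
  "Gamma_zero X b \<omega> = {(t, x). left_lim (\<lambda>s. X s \<omega>) t < b t \<and> x = b t - left_lim (\<lambda>s. X s \<omega>) t}"

end

theory Submission
  imports Defs
begin


definition hitS :: "real set \<Rightarrow> ereal" where
  "hitS A = Inf (ereal ` A)"

lemma hitS_empty[simp]: "hitS {} = \<infinity>" by (simp add: hitS_def top_ereal_def)

lemma hitS_ne:
  assumes "A \<noteq> {}" "A \<subseteq> {0..}"
  shows "hitS A = ereal (Inf A)" "0 \<le> Inf A" "\<And>a. a \<in> A \<Longrightarrow> Inf A \<le> a"
proof -
  have bdd: "bdd_below A" using assms by (auto simp: bdd_below_def)
  show "hitS A = ereal (Inf A)" unfolding hitS_def using ereal_Inf'[OF bdd assms(1)] by simp
  show "0 \<le> Inf A" using assms by (intro cInf_greatest) auto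
  show "\<And>a. a \<in> A \<Longrightarrow> Inf A \<le> a" using bdd by (simp add: cInf_lower)
qed

lemma hitS_fin_iff: "A \<subseteq> {0..} \<Longrightarrow> hitS A < \<infinity> \<longleftrightarrow> A \<noteq> {}"
  by (cases "A = {}") (auto simp: hitS_ne)

lemma hitS_le: "a \<in> A \<Longrightarrow> hitS A \<le> ereal a"
  unfolding hitS_def by (auto intro: Inf_lower)

lemma hitS_less_iff: "hitS A < ereal u \<longleftrightarrow> (\<exists>a\<in>A. a < u)"
  unfolding hitS_def by (auto simp: Inf_less_iff)

lemma hitS_ge: "(\<And>a. a \<in> A \<Longrightarrow> c \<le> ereal a) \<Longrightarrow> c \<le> hitS A"
  unfolding hitS_def by (auto intro: Inf_greatest)

lemma hitS_mono: "A \<subseteq> B \<Longrightarrow> hitS B \<le> hitS A"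
  unfolding hitS_def by (auto intro: Inf_superset_mono)

lemma rc_Inf:
  fixes y :: "real \<Rightarrow> real"
  assumes rc: "\<forall>t\<ge>0. continuous (at_right t) y"
    and ne: "A \<noteq> {}" and A0: "A \<subseteq> {0..}" and c: "\<And>a. a \<in> A \<Longrightarrow> c \<le> y a"
  shows "c \<le> y (Inf A)"
proof (rule ccontr)
  assume "\<not> c \<le> y (Inf A)"
  hence lt: "y (Inf A) < c" by simp
  let ?r = "Inf A"
  have r0: "0 \<le> ?r" using hitS_ne[OF ne A0] by simp
  have "(y \<longlongrightarrow> y ?r) (at_right ?r)" using rc r0 by (simp add: continuous_within)
  hence "eventually (\<lambda>t. y t < c) (at_right ?r)" using lt by (rule order_tendstoD)
  then obtain d where d: "d > ?r" "\<And>t. t > ?r \<Longrightarrow> t < d \<Longrightarrow> y t < c"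
    by (auto simp: eventually_at_right_field)
  have bdd: "bdd_below A" using A0 by (auto simp: bdd_below_def)
  obtain a where a: "a \<in> A" "a < d" using d(1) ne by (metis cInf_less_iff[OF ne bdd])
  have "?r \<le> a" using bdd a(1) by (simp add: cInf_lower)
  moreover have "a \<noteq> ?r" using lt c[OF a(1)] by auto
  ultimately have "y a < c" using d a by auto
  with c[OF a(1)] show False by simp
qed

definition lev :: "nat \<Rightarrow> real" where "lev n = - 1 / (real n + 1)"

lemma lev_neg: "lev n < 0" by (simp add: lev_def)

lemma lev_mono: "n \<le> m \<Longrightarrow> lev n \<le> lev m"
  by (simp add: lev_def frac_le)

lemma lev_tendsto: "lev \<longlonglongrightarrow> 0"
proof -
  have "(\<lambda>n. 1 / (real n + 1)) \<longlonglongrightarrow> 0"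
    using LIMSEQ_Suc[OF lim_inverse_n'] by (simp add: add.commute)
  from tendsto_minus[OF this] have "(\<lambda>n. - (1 / (real n + 1))) \<longlonglongrightarrow> 0" by simp
  moreover have "lev = (\<lambda>n. - (1 / (real n + 1)))" by (auto simp: lev_def fun_eq_iff)
  ultimately show ?thesis by simp
qed

lemma lev_ex_less: "c < 0 \<Longrightarrow> \<exists>n. c < lev n"
proof -
  assume c: "c < 0"
  from lev_tendsto have "eventually (\<lambda>n. c < lev n) sequentially" using c by (rule order_tendstoD)
  thus ?thesis by (auto simp: eventually_sequentially)
qed

definition hit :: "(real \<Rightarrow> real) \<Rightarrow> ereal" where
  "hit y = hitS {t. 0 \<le> t \<and> 0 \<le> y t}"
definition hn :: "(real \<Rightarrow> real) \<Rightarrow> nat \<Rightarrow> ereal" where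
  "hn y n = hitS {t. 0 \<le> t \<and> lev n < y t}"
definition hs :: "(real \<Rightarrow> real) \<Rightarrow> ereal" where
  "hs y = (SUP n. hn y n)"

lemma hn_mono: "n \<le> m \<Longrightarrow> hn y n \<le> hn y m"
  unfolding hn_def by (rule hitS_mono) (auto dest: lev_mono[of n m])

lemma hn_le_hit: "hn y n \<le> hit y"
  unfolding hn_def hit_def by (rule hitS_mono) (auto dest: order.strict_trans[OF lev_neg[of n]] intro: less_le_trans[OF lev_neg])

lemma hn_le_hs: "hn y n \<le> hs y"
  unfolding hs_def by (rule SUP_upper) auto

lemma hs_le_hit: "hs y \<le> hit y"
  unfolding hs_def by (rule SUP_least) (rule hn_le_hit)

lemma hit_before: "0 \<le> s \<Longrightarrow> ereal s < hit y \<Longrightarrow> y s < 0"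
  unfolding hit_def using hitS_le[of s "{t. 0 \<le> t \<and> 0 \<le> y t}"] by force

lemma hn_before: "0 \<le> s \<Longrightarrow> ereal s < hn y n \<Longrightarrow> y s \<le> lev n"
  unfolding hn_def using hitS_le[of s "{t. 0 \<le> t \<and> lev n < y t}"] by force

lemma hit_ge0: "0 \<le> hit y" unfolding hit_def by (rule hitS_ge) auto
lemma hn_ge0: "0 \<le> hn y n" unfolding hn_def by (rule hitS_ge) auto

lemma hs_lt_imp: "ereal t < hs y \<Longrightarrow> \<exists>n. ereal t < hn y n"
  unfolding hs_def by (simp add: less_SUP_iff)

locale cpath =
  fixes y :: "real \<Rightarrow> real"
  assumes rc: "\<forall>t\<ge>0. continuous (at_right t) y"
    and ll: "\<forall>t>0. \<exists>l. (y \<longlongrightarrow> l) (at_left t)"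
    and neg0: "y 0 < 0"
begin

lemma left_lim_eq: "t > 0 \<Longrightarrow> (y \<longlongrightarrow> l) (at_left t) \<Longrightarrow> left_lim y t = l"
  unfolding left_lim_def by (auto intro: tendsto_Lim)

lemma left_lim_tendsto: "t > 0 \<Longrightarrow> (y \<longlongrightarrow> left_lim y t) (at_left t)"
  using ll left_lim_eq by blast

lemma hit_fin:
  assumes "hit y < \<infinity>"
  obtains r where "hit y = ereal r" "0 < r" "0 \<le> y r"
proof -
  let ?A = "{t. 0 \<le> t \<and> 0 \<le> y t}"
  have ne: "?A \<noteq> {}" using assms hitS_fin_iff[of ?A] by (auto simp: hit_def)
  have sub: "?A \<subseteq> {0..}" by auto
  have 1: "0 \<le> y (Inf ?A)" by (rule rc_Inf[OF rc ne sub]) auto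
  have 2: "0 \<le> Inf ?A" using hitS_ne[OF ne sub] by simp
  have "Inf ?A \<noteq> 0" using 1 neg0 by auto
  hence 3: "0 < Inf ?A" using 2 by simp
  have 4: "hit y = ereal (Inf ?A)" unfolding hit_def by (rule hitS_ne(1)[OF ne sub])
  show ?thesis by (rule that[OF 4 3 1])
qed

lemma hit_pos: "0 < hit y"
proof (cases "hit y < \<infinity>")
  case True
  then obtain r where "hit y = ereal r" "0 < r" by (rule hit_fin)
  thus ?thesis by simp
qed simp

lemma hn_fin:
  assumes "hn y n < \<infinity>"
  obtains r where "hn y n = ereal r" "0 \<le> r" "lev n \<le> y r"
proof -
  let ?A = "{t. 0 \<le> t \<and> lev n < y t}"
  have ne: "?A \<noteq> {}" using assms hitS_fin_iff[of ?A] by (auto simp: hn_def)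
  have sub: "?A \<subseteq> {0..}" by auto
  have 1: "lev n \<le> y (Inf ?A)" by (rule rc_Inf[OF rc ne sub]) auto
  have 4: "hn y n = ereal (Inf ?A)" unfolding hn_def by (rule hitS_ne(1)[OF ne sub])
  have 5: "0 \<le> Inf ?A" by (rule hitS_ne(2)[OF ne sub])
  show ?thesis by (rule that[OF 4 5 1])
qed

lemma hs_pos: "0 < hs y"
proof -
  obtain n where n: "y 0 < lev n" using lev_ex_less[OF neg0] by auto
  have "0 < hn y n"
  proof (cases "hn y n < \<infinity>")
    case True
    then obtain r where r: "hn y n = ereal r" "0 \<le> r" "lev n \<le> y r" by (rule hn_fin)
    hence "r \<noteq> 0" using n by auto
    thus ?thesis using r by auto
  qed auto
  thus ?thesis using hn_le_hs[of y n] by auto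
qed

lemma hit_llim_le0:
  assumes "hit y = ereal r" "0 < r"
  shows "left_lim y r \<le> 0"
proof -
  have "\<forall>s>0. s < r \<longrightarrow> y s \<le> 0"
  proof (intro allI impI)
    fix s assume "0 < s" "s < r"
    thus "y s \<le> 0" using hit_before[of s y] assms(1) by simp
  qed
  hence "eventually (\<lambda>s. y s \<le> 0) (at_left r)"
    unfolding eventually_at_left_field using assms(2) by blast
  thus ?thesis using left_lim_tendsto[OF assms(2)] by (intro tendsto_upperbound) auto
qed

lemma K5:
  assumes fin: "hs y = ereal r" and n: "hn y n = hs y"
  shows "hit y = hs y" "left_lim y r < 0" "0 < r"
proof -
  have r0: "0 < r" using hs_pos fin by auto
  show "0 < r" by fact
  have eqm: "hn y m = ereal r" if "n \<le> m" for m
    using hn_mono[OF that, of y] hn_le_hs[of y m] n fin by auto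
  have ge: "lev m \<le> y r" if nm: "n \<le> m" for m
  proof -
    have "hn y m < \<infinity>" using eqm[OF nm] by simp
    then obtain r' where "hn y m = ereal r'" "lev m \<le> y r'" by (rule hn_fin)
    thus ?thesis using eqm[OF nm] by auto
  qed
  have "0 \<le> y r"
  proof (rule ccontr)
    assume "\<not> 0 \<le> y r"
    then obtain m where m: "y r < lev m" using lev_ex_less by force
    have "y r < lev (max m n)" using m lev_mono[of m "max m n"] by auto
    with ge[of "max m n"] show False by auto
  qed
  hence "hit y \<le> ereal r" unfolding hit_def using r0 by (intro hitS_le) auto
  thus "hit y = hs y" using hs_le_hit[of y] fin by auto
  have "\<forall>s>0. s < r \<longrightarrow> y s \<le> lev n"
  proof (intro allI impI)
    fix s assume "0 < s" "s < r"
    thus "y s \<le> lev n" using hn_before[of s y n] fin n by simp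
  qed
  hence "eventually (\<lambda>s. y s \<le> lev n) (at_left r)"
    unfolding eventually_at_left_field using r0 by blast
  hence "left_lim y r \<le> lev n" using left_lim_tendsto[OF r0] by (intro tendsto_upperbound) auto
  thus "left_lim y r < 0" using lev_neg[of n] by auto
qed

lemma K3:
  assumes fin: "hs y = ereal r" and D: "\<forall>n. hn y n < hs y"
  shows "left_lim y r = 0" "0 < r"
proof -
  have r0: "0 < r" using hs_pos fin by auto
  show "0 < r" by fact
  have "\<exists>h. hn y n = ereal h \<and> 0 \<le> h \<and> lev n \<le> y h" for n
  proof -
    have "hn y n < \<infinity>" using D[rule_format, of n] fin by (metis ereal_less_PInfty order.strict_trans)
    then obtain h where "hn y n = ereal h" "0 \<le> h" "lev n \<le> y h" by (rule hn_fin)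
    thus ?thesis by blast
  qed
  then obtain h where h: "\<And>n. hn y n = ereal (h n)" "\<And>n. 0 \<le> h n" "\<And>n. lev n \<le> y (h n)"
    by metis
  have hlt: "h n < r" for n
  proof -
    have "hn y n < hs y" using D by blast
    thus ?thesis using h(1)[of n] fin by simp
  qed
  have "(\<lambda>n. hn y n) \<longlonglongrightarrow> hs y" unfolding hs_def
    by (rule LIMSEQ_SUP) (auto simp: incseq_def intro: hn_mono)
  hence "(\<lambda>n. ereal (h n)) \<longlonglongrightarrow> ereal r" using h(1) fin by simp
  hence hr: "h \<longlonglongrightarrow> r" by (simp add: lim_ereal)
  have "filterlim h (at_left r) sequentially"
    using hr hlt by (auto simp: filterlim_at intro!: always_eventually)
  hence yl: "(\<lambda>n. y (h n)) \<longlonglongrightarrow> left_lim y r"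
    using left_lim_tendsto[OF r0] by (rule filterlim_compose[rotated])
  have ev: "eventually (\<lambda>n. lev n \<le> y (h n)) sequentially" using h(3) by simp
  have "0 \<le> left_lim y r"
    using tendsto_le[OF trivial_limit_sequentially yl lev_tendsto ev] .
  moreover have "\<forall>s>0. s < r \<longrightarrow> y s \<le> 0"
  proof (intro allI impI)
    fix s assume "0 < s" "s < r"
    hence "ereal s < hs y" using fin by simp
    hence "ereal s < hit y" using hs_le_hit[of y] by (rule less_le_trans)
    thus "y s \<le> 0" using hit_before[of s y] \<open>0 < s\<close> by simp
  qed
  hence "eventually (\<lambda>s. y s \<le> 0) (at_left r)"
    unfolding eventually_at_left_field using r0 by blast
  hence "left_lim y r \<le> 0" using left_lim_tendsto[OF r0] by (intro tendsto_upperbound) auto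
  ultimately show "left_lim y r = 0" by auto
qed

lemma K2:
  assumes lt: "hs y < hit y"
  shows "\<exists>r. hs y = ereal r \<and> (\<forall>n. hn y n < hs y) \<and> left_lim y r = 0 \<and> y r < 0 \<and> 0 < r"
proof -
  have "hs y < \<infinity>" using lt by auto
  then obtain r where fin: "hs y = ereal r" using hs_pos[of] by (cases "hs y") auto
  have D: "\<forall>n. hn y n < hs y"
  proof
    fix n
    show "hn y n < hs y"
    proof (rule ccontr)
      assume "\<not> hn y n < hs y"
      hence "hn y n = hs y" using hn_le_hs[of y n] by auto
      from K5(1)[OF fin this] lt show False by simp
    qed
  qed
  have "y r < 0" using hit_before[of r y] lt fin K3(2)[OF fin D] by simp
  thus ?thesis using fin D K3[OF fin D] by blast
qed

lemma K4:
  assumes "hit y = ereal r" "0 < r" "left_lim y r = 0"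
  shows "hn y n < hit y"
proof -
  have "eventually (\<lambda>s. lev n < y s) (at_left r)"
    using left_lim_tendsto[OF assms(2)] assms(3) lev_neg[of n] by (auto intro: order_tendstoD)
  then obtain b where b: "b < r" "\<And>s. b < s \<Longrightarrow> s < r \<Longrightarrow> lev n < y s"
    by (auto simp: eventually_at_left_field)
  define s where "s = (max b 0 + r) / 2"
  have s: "0 \<le> s" "b < s" "s < r" using b assms(2) by (auto simp: s_def)
  have "lev n < y s" using b(2) s(2,3) by blast
  hence "hn y n \<le> ereal s" unfolding hn_def using s(1) by (intro hitS_le) simp
  moreover have "ereal s < hit y" using s(3) assms(1) by simp
  ultimately show ?thesis by (rule le_less_trans)
qed

lemma K1:
  assumes "0 \<le> t" "ereal t < hs y"
  shows "(SUP s\<in>{0..t}. y s) < 0"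
proof -
  obtain n where n: "ereal t < hn y n" using hs_lt_imp[OF assms(2)] by auto
  have "(SUP s\<in>{0..t}. y s) \<le> lev n"
  proof (rule cSUP_least)
    show "{0..t} \<noteq> {}" using assms(1) by simp
    fix s assume s: "s \<in> {0..t}"
    hence "ereal s < hn y n" using n by (metis atLeastAtMost_iff ereal_less_eq(3) order.strict_trans1)
    thus "y s \<le> lev n" using hn_before[of s y n] s by simp
  qed
  thus ?thesis using lev_neg[of n] by linarith
qed

end




locale setting =
  fixes M :: "'a measure" and F :: "real \<Rightarrow> 'a measure"
    and X :: "real \<Rightarrow> 'a \<Rightarrow> real" and b :: "real \<Rightarrow> real"
    and \<nu> :: "'a \<Rightarrow> (real \<times> real) measure"
  assumes filt: "usual_filtration M F"
    and adX: "adapted M F X"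
    and cadX: "cadlag_process M X"
    and b_cont: "continuous_on {0..} b"
    and start: "\<forall>\<omega>\<in>space M. X 0 \<omega> < b 0"
    and comp: "compensator M F X \<nu>"
begin

abbreviation "P \<equiv> predictable_sigma M F"

definition Yw :: "'a \<Rightarrow> real \<Rightarrow> real" where "Yw \<omega> = (\<lambda>t. Yp X b t \<omega>)"

lemma prob: "prob_space M" using filt unfolding usual_filtration_def by (elim conjE) assumption
lemma complete: "complete_measure M" using filt unfolding usual_filtration_def by (elim conjE) assumption
lemma F1: "\<forall>t\<ge>0. space (F t) = space M \<and> sets (F t) \<subseteq> sets M"
  using filt unfolding usual_filtration_def by (elim conjE) assumption
lemma F2: "\<forall>s t. 0 \<le> s \<and> s \<le> t \<longrightarrow> sets (F s) \<subseteq> sets (F t)"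
  using filt unfolding usual_filtration_def by (elim conjE) assumption
lemma nullF0: "null_sets M \<subseteq> sets (F 0)"
  using filt unfolding usual_filtration_def by (elim conjE) assumption
lemma F3: "\<forall>t\<ge>0. sets (F t) = (\<Inter>s\<in>{t<..}. sets (F s))"
  using filt unfolding usual_filtration_def by (elim conjE) assumption
lemma spF: "t \<ge> 0 \<Longrightarrow> space (F t) = space M" using F1 by simp
lemma setsF: "t \<ge> 0 \<Longrightarrow> sets (F t) \<subseteq> sets M" using F1 by simp
lemma Fmono: "0 \<le> s \<Longrightarrow> s \<le> t \<Longrightarrow> sets (F s) \<subseteq> sets (F t)" using F2 by simp
lemma Frc: "t \<ge> 0 \<Longrightarrow> (\<And>s. s > t \<Longrightarrow> A \<in> sets (F s)) \<Longrightarrow> A \<in> sets (F t)"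
proof -
  assume t: "t \<ge> 0" and A: "\<And>s. s > t \<Longrightarrow> A \<in> sets (F s)"
  have "A \<in> (\<Inter>s\<in>{t<..}. sets (F s))" using A by simp
  thus ?thesis using F3 t by (simp only:)
qed

lemma b_right: "t \<ge> 0 \<Longrightarrow> continuous (at_right t) b"
proof -
  assume t: "t \<ge> 0"
  have "continuous (at t within {0..}) b" using b_cont t by (simp add: continuous_on_eq_continuous_within)
  thus ?thesis by (rule continuous_within_subset) (use t in auto)
qed

lemma b_left: "t > 0 \<Longrightarrow> (b \<longlongrightarrow> b t) (at_left t)"
proof -
  assume t: "t > 0"
  have "continuous (at t within {0..}) b" using b_cont t by (simp add: continuous_on_eq_continuous_within)
  hence "continuous (at t within {0..t}) b" by (rule continuous_within_subset) auto
  thus ?thesis using at_within_Icc_at_left[OF t] by (simp add: continuous_within)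
qed

lemma cadX': "\<omega> \<in> space M \<Longrightarrow> cadlag (\<lambda>t. X t \<omega>)"
  using cadX by (simp add: cadlag_process_def)

lemma X_right: "\<omega> \<in> space M \<Longrightarrow> t \<ge> 0 \<Longrightarrow> continuous (at_right t) (\<lambda>s. X s \<omega>)"
  using cadX' by (simp add: cadlag_def)

lemma X_left: "\<omega> \<in> space M \<Longrightarrow> t > 0 \<Longrightarrow> ((\<lambda>s. X s \<omega>) \<longlongrightarrow> left_lim (\<lambda>s. X s \<omega>) t) (at_left t)"
proof -
  assume w: "\<omega> \<in> space M" and t: "t > 0"
  obtain l where l: "((\<lambda>s. X s \<omega>) \<longlongrightarrow> l) (at_left t)" using cadX'[OF w] t by (auto simp: cadlag_def)
  have "left_lim (\<lambda>s. X s \<omega>) t = l" unfolding left_lim_def using t l by (auto intro: tendsto_Lim)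
  thus ?thesis using l by simp
qed

lemma Y_left: "\<omega> \<in> space M \<Longrightarrow> t > 0 \<Longrightarrow> (Yw \<omega> \<longlongrightarrow> left_lim (\<lambda>s. X s \<omega>) t - b t) (at_left t)"
  unfolding Yw_def Yp_def by (intro tendsto_diff X_left b_left)

lemma Y_ll: "\<omega> \<in> space M \<Longrightarrow> t > 0 \<Longrightarrow> left_lim (Yw \<omega>) t = left_lim (\<lambda>s. X s \<omega>) t - b t"
proof -
  assume w: "\<omega> \<in> space M" and t: "t > 0"
  have "left_lim (Yw \<omega>) t = Lim (at_left t) (Yw \<omega>)" using t by (simp add: left_lim_def)
  also have "\<dots> = left_lim (\<lambda>s. X s \<omega>) t - b t"
    by (rule tendsto_Lim[OF _ Y_left[OF w t]]) simp
  finally show ?thesis .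
qed

lemma cpath: "\<omega> \<in> space M \<Longrightarrow> cpath (Yw \<omega>)"
proof
  assume w: "\<omega> \<in> space M"
  show "\<forall>t\<ge>0. continuous (at_right t) (Yw \<omega>)"
    unfolding Yw_def Yp_def using X_right[OF w] b_right by (auto intro: continuous_diff)
  show "\<forall>t>0. \<exists>l. (Yw \<omega> \<longlongrightarrow> l) (at_left t)" using Y_left[OF w] by blast
  show "Yw \<omega> 0 < 0" using start w by (simp add: Yw_def Yp_def)
qed

lemma jump_Y: "\<omega> \<in> space M \<Longrightarrow> t > 0 \<Longrightarrow> jump (\<lambda>s. X s \<omega>) t = Yw \<omega> t - left_lim (Yw \<omega>) t"
  using Y_ll by (simp add: jump_def Yw_def Yp_def)

lemma hit_time_eq: "hit_time X b \<omega> = hit (Yw \<omega>)"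
proof -
  have "{ereal t |t. 0 \<le> t \<and> 0 \<le> Yp X b t \<omega>} = ereal ` {t. 0 \<le> t \<and> 0 \<le> Yw \<omega> t}"
    by (auto simp: Yw_def)
  thus ?thesis by (simp add: hit_time_def hit_def hitS_def)
qed

lemma Y_meas: "t \<ge> 0 \<Longrightarrow> (\<lambda>\<omega>. Yw \<omega> t) \<in> borel_measurable (F t)"
proof -
  assume t: "t \<ge> 0"
  have "X t \<in> borel_measurable (F t)" using adX t by (simp add: adapted_def)
  thus ?thesis unfolding Yw_def Yp_def by (intro borel_measurable_diff) auto
qed

lemma Y_measM: "t \<ge> 0 \<Longrightarrow> (\<lambda>\<omega>. Yw \<omega> t) \<in> borel_measurable M"
proof -
  assume t: "t \<ge> 0"
  have "(\<lambda>\<omega>. Yw \<omega> t) \<in> borel_measurable (F t)" by (rule Y_meas[OF t])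
  thus ?thesis using spF[OF t] setsF[OF t] unfolding measurable_def by auto
qed

lemma Fsets_Y: "t \<ge> 0 \<Longrightarrow> {\<omega>\<in>space M. c < Yw \<omega> t} \<in> sets (F t)"
proof -
  assume t: "t \<ge> 0"
  have "{\<omega>\<in>space (F t). c < Yw \<omega> t} \<in> sets (F t)" using Y_meas[OF t] by measurable
  thus ?thesis using spF[OF t] by simp
qed

end



context setting
begin

lemma hn_less_set:
  assumes u: "u > 0"
  shows "{\<omega>\<in>space M. hn (Yw \<omega>) n < ereal u} = (\<Union>q\<in>\<rat>\<inter>{0..<u}. {\<omega>\<in>space M. lev n < Yw \<omega> q})"
proof (intro set_eqI iffI)
  fix \<omega> assume "\<omega> \<in> {\<omega>\<in>space M. hn (Yw \<omega>) n < ereal u}"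
  hence w: "\<omega> \<in> space M" and lt: "hn (Yw \<omega>) n < ereal u" by auto
  obtain a where a: "0 \<le> a" "lev n < Yw \<omega> a" "a < u"
    using lt unfolding hn_def hitS_less_iff by auto
  interpret cpath "Yw \<omega>" by (rule cpath[OF w])
  have "(Yw \<omega> \<longlongrightarrow> Yw \<omega> a) (at_right a)" using rc a(1) by (simp add: continuous_within)
  hence "eventually (\<lambda>t. lev n < Yw \<omega> t) (at_right a)" using a(2) by (rule order_tendstoD)
  then obtain d where d: "d > a" "\<And>t. t > a \<Longrightarrow> t < d \<Longrightarrow> lev n < Yw \<omega> t"
    by (auto simp: eventually_at_right_field)
  obtain q where q: "q \<in> \<rat>" "a < q" "q < min d u" using Rats_dense_in_real[of a "min d u"] d(1) a(3) by auto
  have "lev n < Yw \<omega> q" using d(2)[of q] q by auto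
  thus "\<omega> \<in> (\<Union>q\<in>\<rat>\<inter>{0..<u}. {\<omega>\<in>space M. lev n < Yw \<omega> q})" using q a(1) w by auto
next
  fix \<omega> assume "\<omega> \<in> (\<Union>q\<in>\<rat>\<inter>{0..<u}. {\<omega>\<in>space M. lev n < Yw \<omega> q})"
  then obtain q where q: "q \<in> \<rat>" "0 \<le> q" "q < u" "lev n < Yw \<omega> q" and w: "\<omega> \<in> space M" by auto
  have "hn (Yw \<omega>) n \<le> ereal q" unfolding hn_def using q by (intro hitS_le) simp
  also have "\<dots> < ereal u" using q by simp
  finally show "\<omega> \<in> {\<omega>\<in>space M. hn (Yw \<omega>) n < ereal u}" using w by simp
qed

lemma countable_Rats_Int: "countable (\<rat> \<inter> A)"
  using countable_rat by (rule countable_subset[rotated]) auto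

lemma hn_less_Fs:
  assumes u: "u > 0" and s: "u \<le> s"
  shows "{\<omega>\<in>space M. hn (Yw \<omega>) n < ereal u} \<in> sets (F s)"
proof -
  have "(\<Union>q\<in>\<rat>\<inter>{0..<u}. {\<omega>\<in>space M. lev n < Yw \<omega> q}) \<in> sets (F s)"
  proof (rule sets.countable_UN'')
    show "countable (\<rat>\<inter>{0..<u})" by (rule countable_Rats_Int)
    fix q assume q: "q \<in> \<rat>\<inter>{0..<u}"
    have "{\<omega>\<in>space M. lev n < Yw \<omega> q} \<in> sets (F q)" using q by (intro Fsets_Y) auto
    thus "{\<omega>\<in>space M. lev n < Yw \<omega> q} \<in> sets (F s)" using Fmono[of q s] q s by auto
  qed
  thus ?thesis using hn_less_set[OF u] by simp
qed

lemma le_iff_less_seq: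
  fixes h :: ereal
  assumes "t < s"
  shows "h \<le> ereal t \<longleftrightarrow> (\<forall>m::nat. h < ereal (t + (s - t) / (real m + 1)))"
proof
  assume "h \<le> ereal t"
  moreover have "ereal t < ereal (t + (s - t) / (real m + 1))" for m using assms by simp
  ultimately show "\<forall>m::nat. h < ereal (t + (s - t) / (real m + 1))" using le_less_trans by blast
next
  assume H: "\<forall>m::nat. h < ereal (t + (s - t) / (real m + 1))"
  show "h \<le> ereal t"
  proof (rule ccontr)
    assume "\<not> h \<le> ereal t"
    hence gt: "ereal t < h" by simp
    show False
    proof (cases h)
      case (real r)
      hence rt: "t < r" using gt by simp
      obtain m where m: "inverse (real (Suc m)) < (r - t) / (s - t)"
        using reals_Archimedean[of "(r - t) / (s - t)"] rt assms by auto
      have "(s - t) / (real m + 1) = (s - t) * inverse (real (Suc m))" by (simp add: field_simps)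
      also have "\<dots> < (s - t) * ((r - t) / (s - t))" using m assms by (intro mult_strict_left_mono) auto
      also have "\<dots> = r - t" using assms by simp
      finally have "t + (s - t) / (real m + 1) < r" by simp
      thus False using H[rule_format, of m] real by simp
    next
      case PInf thus False using H by simp
    next
      case MInf thus False using gt by simp
    qed
  qed
qed

lemma hn_le_Ft:
  assumes t: "t \<ge> 0"
  shows "{\<omega>\<in>space M. hn (Yw \<omega>) n \<le> ereal t} \<in> sets (F t)"
proof (rule Frc[OF t])
  fix s assume s: "s > t"
  have eq: "{\<omega>\<in>space M. hn (Yw \<omega>) n \<le> ereal t} =
      (\<Inter>m. {\<omega>\<in>space M. hn (Yw \<omega>) n < ereal (t + (s - t) / (real m + 1))})"
    using le_iff_less_seq[OF s] by auto
  have "(\<Inter>m. {\<omega>\<in>space M. hn (Yw \<omega>) n < ereal (t + (s - t) / (real m + 1))}) \<in> sets (F s)"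
  proof (rule sets.countable_INT)
    show "range (\<lambda>m. {\<omega>\<in>space M. hn (Yw \<omega>) n < ereal (t + (s - t) / (real m + 1))}) \<subseteq> sets (F s)"
    proof safe
      fix m :: nat
      have pos: "0 < (s - t) / (real m + 1)" using s by simp
      have le: "(s - t) / (real m + 1) \<le> s - t" using s by (simp add: divide_le_eq)
      show "{\<omega>\<in>space M. hn (Yw \<omega>) n < ereal (t + (s - t) / (real m + 1))} \<in> sets (F s)"
        using pos le t by (intro hn_less_Fs) auto
    qed
  qed simp
  thus "{\<omega>\<in>space M. hn (Yw \<omega>) n \<le> ereal t} \<in> sets (F s)" using eq by simp
qed

lemma hn_stop: "stopping_time_e M F (\<lambda>\<omega>. hn (Yw \<omega>) n)"
  unfolding stopping_time_e_def using hn_le_Ft hn_ge0 by auto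

lemma hs_le_Ft:
  assumes t: "t \<ge> 0"
  shows "{\<omega>\<in>space M. hs (Yw \<omega>) \<le> ereal t} \<in> sets (F t)"
proof -
  have "{\<omega>\<in>space M. hs (Yw \<omega>) \<le> ereal t} = (\<Inter>n. {\<omega>\<in>space M. hn (Yw \<omega>) n \<le> ereal t})"
    by (auto simp: hs_def SUP_le_iff)
  also have "\<dots> \<in> sets (F t)" using hn_le_Ft[OF t] by (intro sets.countable_INT) auto
  finally show ?thesis .
qed

lemma hs_ge0: "0 \<le> hs y" using hn_ge0[of y 0] hn_le_hs[of y 0] by (rule order.trans)

lemma hs_stop: "stopping_time_e M F (\<lambda>\<omega>. hs (Yw \<omega>))"
  unfolding stopping_time_e_def using hs_le_Ft hs_ge0 by auto

lemma stop_meas: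
  assumes T: "stopping_time_e M F T"
  shows "T \<in> borel_measurable M"
proof (rule borel_measurableI_le)
  fix y :: ereal
  show "{x \<in> space M. T x \<le> y} \<in> sets M"
  proof (cases y)
    case (real r)
    show ?thesis
    proof (cases "r \<ge> 0")
      case True
      hence "{x \<in> space M. T x \<le> ereal r} \<in> sets (F r)" using T by (simp add: stopping_time_e_def)
      thus ?thesis using setsF[OF True] real by auto
    next
      case False
      have "{x \<in> space M. T x \<le> y} = {}"
      proof safe
        fix x assume "x \<in> space M" "T x \<le> y"
        moreover have "0 \<le> T x" using T \<open>x \<in> space M\<close> by (simp add: stopping_time_e_def)
        ultimately have "(0::ereal) \<le> ereal r" using real by (blast intro: order.trans)
        thus "x \<in> {}" using False by simp
      qed
      thus ?thesis by (simp only: sets.empty_sets)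
    qed
  next
    case PInf thus ?thesis by simp
  next
    case MInf
    have "{x \<in> space M. T x \<le> y} = {}"
    proof safe
      fix x assume "x \<in> space M" "T x \<le> y"
      moreover have "0 \<le> T x" using T \<open>x \<in> space M\<close> by (simp add: stopping_time_e_def)
      ultimately show "x \<in> {}" using MInf by auto
    qed
    thus ?thesis by (simp only: sets.empty_sets)
  qed
qed

lemma stop_sets:
  assumes T: "stopping_time_e M F T" and t: "t \<ge> 0"
  shows "{\<omega>\<in>space M. T \<omega> \<le> ereal t} \<in> sets (F t)"
  using T t by (simp add: stopping_time_e_def)

end



context setting
begin

definition gensP where
  "gensP = {A \<times> {0} | A. A \<in> sets (F 0)} \<union> {A \<times> {s<..t} | A s t. 0 \<le> s \<and> s < t \<and> A \<in> sets (F s)}"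

lemma gensP_Pow: "gensP \<subseteq> Pow (space M \<times> {0..})"
proof (rule subsetI)
  fix y assume "y \<in> gensP"
  then consider A where "y = A \<times> {0}" "A \<in> sets (F 0)"
    | A s u where "y = A \<times> {s<..u}" "0 \<le> s" "s < u" "A \<in> sets (F s)"
    unfolding gensP_def by blast
  thus "y \<in> Pow (space M \<times> {0..})"
  proof cases
    case 1
    have "A \<subseteq> space M" using sets.sets_into_space[OF 1(2)] spF[of 0] by simp
    thus ?thesis using 1 by auto
  next
    case 2
    have "A \<subseteq> space M" using sets.sets_into_space[OF 2(4)] spF[OF 2(2)] by simp
    thus ?thesis using 2 by auto
  qed
qed

lemma P_eq: "P = sigma (space M \<times> {0..}) gensP"
  unfolding predictable_sigma_def gensP_def by simp

lemma space_P: "space P = space M \<times> {0..}"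
  unfolding P_eq by (simp add: space_measure_of_conv)

lemma sets_P: "sets P = sigma_sets (space M \<times> {0..}) gensP"
  unfolding P_eq using gensP_Pow by (simp add: sets_measure_of)

lemma genP1: "A \<in> sets (F 0) \<Longrightarrow> A \<times> {0} \<in> sets P"
  unfolding sets_P gensP_def by (rule sigma_sets.Basic) blast

lemma genP2: "A \<in> sets (F s) \<Longrightarrow> 0 \<le> s \<Longrightarrow> s < t \<Longrightarrow> A \<times> {s<..t} \<in> sets P"
  unfolding sets_P gensP_def by (rule sigma_sets.Basic) blast

lemma genP3: assumes "A \<in> sets (F s)" "0 \<le> s" shows "A \<times> {s<..} \<in> sets P"
proof -
  have "A \<times> {s<..} = (\<Union>N::nat. A \<times> {s<..s + real N + 1})"
  proof (intro set_eqI iffI)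
    fix z assume z: "z \<in> A \<times> {s<..}"
    obtain N :: nat where "snd z - s \<le> real N" using real_arch_simple by blast
    thus "z \<in> (\<Union>N::nat. A \<times> {s<..s + real N + 1})" using z by (intro UN_I[of N]) (auto simp: mem_Times_iff)
  qed (auto simp: mem_Times_iff)
  also have "\<dots> \<in> sets P"
  proof (rule sets.countable_UN)
    show "range (\<lambda>N::nat. A \<times> {s<..s + real N + 1}) \<subseteq> sets P"
    proof (rule image_subsetI)
      fix N :: nat show "A \<times> {s<..s + real N + 1} \<in> sets P" using assms by (intro genP2) auto
    qed
  qed
  finally show ?thesis .
qed

lemma genP4: assumes "A \<in> sets (F 0)" shows "A \<times> {0..} \<in> sets P"
proof -
  have "A \<times> {0::real..} = A \<times> {0} \<union> A \<times> {0<..}" by auto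
  also have "\<dots> \<in> sets P" using assms genP1 genP3[of A 0] by auto
  finally show ?thesis .
qed

lemma genP5: assumes "A \<in> sets (F 0)" shows "A \<times> ({0..} \<inter> {c<..}) \<in> sets P"
proof (cases "c < 0")
  case True
  hence "{0..} \<inter> {c<..} = {0::real..}" by auto
  thus ?thesis using genP4[OF assms] by simp
next
  case False
  hence "{0..} \<inter> {c<..} = {c<..}" by auto
  moreover have "A \<in> sets (F c)" using Fmono[of 0 c] False assms by auto
  ultimately show ?thesis using genP3[of A c] False by simp
qed

lemma genP6: assumes "A \<in> sets (F 0)" "0 \<le> c" shows "A \<times> {0..c} \<in> sets P"
proof (cases "c = 0")
  case True thus ?thesis using genP1[OF assms(1)] by simp
next
  case False
  hence "A \<times> {0..c} = A \<times> {0} \<union> A \<times> {0<..c}" using assms(2) by (auto simp: mem_Times_iff)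
  also have "\<dots> \<in> sets P" using assms False genP1 genP2[of A 0 c] by auto
  finally show ?thesis .
qed

definition afterP :: "('a \<Rightarrow> ereal) \<Rightarrow> ('a \<times> real) set" where
  "afterP T = {(\<omega>, t). \<omega> \<in> space M \<and> 0 \<le> t \<and> T \<omega> < ereal t}"

definition uptoP :: "('a \<Rightarrow> ereal) \<Rightarrow> ('a \<times> real) set" where
  "uptoP T = {(\<omega>, t). \<omega> \<in> space M \<and> 0 \<le> t \<and> ereal t \<le> T \<omega>}"

lemma afterP_P:
  assumes T: "stopping_time_e M F T"
  shows "afterP T \<in> sets P"
proof -
  have "afterP T = (\<Union>q\<in>\<rat>\<inter>{0..}. {\<omega>\<in>space M. T \<omega> \<le> ereal q} \<times> {q<..})"
  proof (intro set_eqI iffI)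
    fix z assume z: "z \<in> afterP T"
    obtain \<omega> t where zz: "z = (\<omega>, t)" by (cases z)
    hence w: "\<omega> \<in> space M" and t: "0 \<le> t" and lt: "T \<omega> < ereal t" using z by (auto simp: afterP_def)
    have T0: "0 \<le> T \<omega>" using T w by (simp add: stopping_time_e_def)
    then obtain r where r: "T \<omega> = ereal r" "0 \<le> r" using lt by (cases "T \<omega>") auto
    hence "r < t" using lt by simp
    then obtain q where q: "q \<in> \<rat>" "r < q" "q < t" using Rats_dense_in_real by blast
    show "z \<in> (\<Union>q\<in>\<rat>\<inter>{0..}. {\<omega>\<in>space M. T \<omega> \<le> ereal q} \<times> {q<..})"
      using q r w zz by (intro UN_I[of q]) auto
  next
    fix z assume "z \<in> (\<Union>q\<in>\<rat>\<inter>{0..}. {\<omega>\<in>space M. T \<omega> \<le> ereal q} \<times> {q<..})"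
    then obtain q where q: "q \<in> \<rat>" "0 \<le> q" "fst z \<in> space M" "T (fst z) \<le> ereal q" "q < snd z"
      by (auto simp: mem_Times_iff)
    have "T (fst z) < ereal (snd z)" using q(4,5) by (auto intro: order.strict_trans1)
    thus "z \<in> afterP T" unfolding afterP_def using q by (cases z) auto
  qed
  also have "\<dots> \<in> sets P"
  proof (rule sets.countable_UN'')
    show "countable (\<rat>\<inter>{0::real..})" by (rule countable_Rats_Int)
    fix q :: real assume "q \<in> \<rat>\<inter>{0..}"
    thus "{\<omega>\<in>space M. T \<omega> \<le> ereal q} \<times> {q<..} \<in> sets P"
      using T by (intro genP3) (auto simp: stopping_time_e_def)
  qed
  finally show ?thesis .
qed

lemma uptoP_P:
  assumes T: "stopping_time_e M F T"
  shows "uptoP T \<in> sets P"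
proof -
  have "uptoP T = space P - afterP T" unfolding space_P uptoP_def afterP_def by auto
  thus ?thesis using afterP_P[OF T] by simp
qed

lemma const_stop: "c \<ge> 0 \<Longrightarrow> stopping_time_e M F (\<lambda>_. ereal c)"
proof -
  assume c: "c \<ge> 0"
  have "{\<omega>\<in>space M. ereal c \<le> ereal t} \<in> sets (F t)" if "t \<ge> 0" for t
  proof (cases "c \<le> t")
    case True
    hence eq: "{\<omega>\<in>space M. ereal c \<le> ereal t} = space (F t)" using spF[OF that] by simp
    show ?thesis unfolding eq by (rule sets.top)
  next
    case False
    hence eq: "{\<omega>\<in>space M. ereal c \<le> ereal t} = {}" by simp
    show ?thesis unfolding eq by (rule sets.empty_sets)
  qed
  note H = this
  show ?thesis unfolding stopping_time_e_def
  proof (intro conjI ballI allI impI)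
    show "0 \<le> ereal c" using c by simp
    fix t :: real assume "0 \<le> t" thus "{\<omega>\<in>space M. ereal c \<le> ereal t} \<in> sets (F t)" by (rule H)
  qed
qed

lemma section_meas:
  assumes t: "t \<ge> 0"
  shows "(\<lambda>\<omega>. (\<omega>, t)) \<in> measurable M P"
  unfolding P_eq
proof (rule measurable_measure_of[OF gensP_Pow])
  show "(\<lambda>\<omega>. (\<omega>, t)) \<in> space M \<rightarrow> space M \<times> {0..}" using t by auto
  fix y assume "y \<in> gensP"
  then consider A where "y = A \<times> {0}" "A \<in> sets (F 0)"
    | A s u where "y = A \<times> {s<..u}" "0 \<le> s" "s < u" "A \<in> sets (F s)"
    unfolding gensP_def by blast
  thus "(\<lambda>\<omega>. (\<omega>, t)) -` y \<inter> space M \<in> sets M"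
  proof cases
    case 1
    have "A \<in> sets M" using 1 setsF[of 0] by auto
    thus ?thesis using 1 sets.sets_into_space[of A M] by (cases "t = 0") (auto simp: Int_absorb2)
  next
    case 2
    have "A \<in> sets M" using 2 setsF[of s] by auto
    thus ?thesis using 2 sets.sets_into_space[of A M] by (cases "t \<in> {s<..u}") (auto simp: Int_absorb2)
  qed
qed

end



lemma pow2_tendsto: "(\<lambda>m::nat. 1 / (2::real) ^ m) \<longlonglongrightarrow> 0"
  by (rule LIMSEQ_divide_realpow_zero) simp

lemma approx_left:
  fixes t :: real
  assumes t: "t > 0"
  shows "filterlim (\<lambda>m::nat. of_int (\<lceil>t * 2 ^ m\<rceil> - 1) / 2 ^ m) (at_left t) sequentially"
proof -
  let ?d = "\<lambda>m::nat. of_int (\<lceil>t * 2 ^ m\<rceil> - 1) / (2::real) ^ m"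
  have lt: "?d m < t" for m
  proof -
    have "of_int (\<lceil>t * 2 ^ m\<rceil> - 1) < t * 2 ^ m" by linarith
    thus ?thesis by (simp add: divide_less_eq)
  qed
  have ge: "t - 1 / 2 ^ m \<le> ?d m" for m
  proof -
    have "t * 2 ^ m - 1 \<le> of_int (\<lceil>t * 2 ^ m\<rceil> - 1)" by linarith
    hence "(t * 2 ^ m - 1) / 2 ^ m \<le> ?d m" by (intro divide_right_mono) auto
    thus ?thesis by (simp add: diff_divide_distrib)
  qed
  have "(\<lambda>m. t - 1 / 2 ^ m) \<longlonglongrightarrow> t - 0" by (intro tendsto_diff tendsto_const pow2_tendsto)
  hence low: "(\<lambda>m. t - 1 / 2 ^ m) \<longlonglongrightarrow> t" by simp
  have e1: "eventually (\<lambda>m. t - 1 / 2 ^ m \<le> ?d m) sequentially" using ge by simp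
  have e2: "eventually (\<lambda>m. ?d m \<le> t) sequentially" using lt by (simp add: less_imp_le)
  have lim: "?d \<longlonglongrightarrow> t" by (rule tendsto_sandwich[OF e1 e2 low tendsto_const])
  have e3: "eventually (\<lambda>m. ?d m \<in> {..<t} \<and> ?d m \<noteq> t) sequentially" using lt by (simp add: less_imp_neq)
  show ?thesis unfolding filterlim_at by (intro conjI e3 lim)
qed

lemma approx_right:
  fixes t :: real
  shows "filterlim (\<lambda>m::nat. (of_int \<lfloor>t * 2 ^ m\<rfloor> + 1) / 2 ^ m) (at_right t) sequentially"
proof -
  let ?d = "\<lambda>m::nat. (of_int \<lfloor>t * 2 ^ m\<rfloor> + 1) / (2::real) ^ m"
  have gt: "t < ?d m" for m
  proof -
    have "t * 2 ^ m < of_int \<lfloor>t * 2 ^ m\<rfloor> + 1" by linarith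
    thus ?thesis by (simp add: less_divide_eq)
  qed
  have le: "?d m \<le> t + 1 / 2 ^ m" for m
  proof -
    have "of_int \<lfloor>t * 2 ^ m\<rfloor> + 1 \<le> t * 2 ^ m + 1" by linarith
    hence "?d m \<le> (t * 2 ^ m + 1) / 2 ^ m" by (intro divide_right_mono) auto
    thus ?thesis by (simp add: add_divide_distrib)
  qed
  have "(\<lambda>m. t + 1 / 2 ^ m) \<longlonglongrightarrow> t + 0" by (intro tendsto_add tendsto_const pow2_tendsto)
  hence up: "(\<lambda>m. t + 1 / 2 ^ m) \<longlonglongrightarrow> t" by simp
  have e1: "eventually (\<lambda>m. t \<le> ?d m) sequentially" using gt by (simp add: less_imp_le)
  have e2: "eventually (\<lambda>m. ?d m \<le> t + 1 / 2 ^ m) sequentially" using le by simp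
  have lim: "?d \<longlonglongrightarrow> t" by (rule tendsto_sandwich[OF e1 e2 tendsto_const up])
  have e3: "eventually (\<lambda>m. ?d m \<in> {t<..} \<and> ?d m \<noteq> t) sequentially" using gt by (simp add: less_imp_neq[symmetric])
  show ?thesis unfolding filterlim_at by (intro conjI e3 lim)
qed

context setting
begin

lemma space_F0: "space M \<in> sets (F 0)"
  using sets.top[of "F 0"] spF[of 0] by simp

lemma snd_P: "snd \<in> borel_measurable P"
proof (rule borel_measurableI_greater)
  fix a :: real
  have "{x \<in> space P. a < snd x} = space M \<times> ({0..} \<inter> {a<..})" unfolding space_P by auto
  thus "{x \<in> space P. a < snd x} \<in> sets P" using genP5[OF space_F0] by simp
qed

definition LL :: "'a \<times> real \<Rightarrow> real" where
  "LL z = left_lim (Yw (fst z)) (snd z)"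

definition Zm :: "nat \<Rightarrow> 'a \<times> real \<Rightarrow> real" where
  "Zm m z = Yw (fst z) (if snd z \<le> 0 then 0 else of_int (\<lceil>snd z * 2 ^ m\<rceil> - 1) / 2 ^ m)"

lemma ceil_nat:
  fixes x :: real
  assumes "x > 0"
  shows "of_int (\<lceil>x\<rceil> - 1) = real (nat (\<lceil>x\<rceil> - 1))" "real (nat (\<lceil>x\<rceil> - 1)) < x" "x \<le> real (nat (\<lceil>x\<rceil> - 1)) + 1"
proof -
  have "\<lceil>x\<rceil> \<ge> 1" using assms by (simp add: one_le_ceiling)
  thus "of_int (\<lceil>x\<rceil> - 1) = real (nat (\<lceil>x\<rceil> - 1))" by simp
  thus "real (nat (\<lceil>x\<rceil> - 1)) < x" "x \<le> real (nat (\<lceil>x\<rceil> - 1)) + 1" by linarith+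
qed

lemma ceil_unique:
  fixes x :: real
  assumes "real k < x" "x \<le> real k + 1"
  shows "of_int (\<lceil>x\<rceil> - 1) = real k"
proof -
  have "\<lceil>x\<rceil> = int k + 1" using assms by (subst ceiling_eq_iff) simp
  thus ?thesis by simp
qed

lemma Zm_meas: "Zm m \<in> borel_measurable P"
proof (rule borel_measurableI_greater)
  fix a :: real
  let ?p = "(2::real) ^ m"
  have eq: "{z \<in> space P. a < Zm m z} =
    ({\<omega>\<in>space M. a < Yw \<omega> 0} \<times> {0}) \<union>
    (\<Union>k::nat. {\<omega>\<in>space M. a < Yw \<omega> (real k / ?p)} \<times> {real k / ?p<..(real k + 1) / ?p})"
  proof (intro set_eqI iffI)
    fix z assume z: "z \<in> {z \<in> space P. a < Zm m z}"
    obtain \<omega> t where zz: "z = (\<omega>, t)" by (cases z)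
    have w: "\<omega> \<in> space M" and t: "0 \<le> t" and az: "a < Zm m (\<omega>, t)" using z zz by (auto simp: space_P)
    show "z \<in> ({\<omega>\<in>space M. a < Yw \<omega> 0} \<times> {0}) \<union>
      (\<Union>k::nat. {\<omega>\<in>space M. a < Yw \<omega> (real k / ?p)} \<times> {real k / ?p<..(real k + 1) / ?p})"
    proof (cases "t = 0")
      case True thus ?thesis using az w zz by (simp add: Zm_def)
    next
      case False
      hence tp: "t > 0" using t by simp
      define k where "k = nat (\<lceil>t * ?p\<rceil> - 1)"
      have xp: "t * ?p > 0" using tp by simp
      note c = ceil_nat[OF xp, folded k_def]
      have "Zm m (\<omega>, t) = Yw \<omega> (real k / ?p)" using tp c(1) by (simp add: Zm_def)
      moreover have "real k / ?p < t" using c(2) by (simp add: divide_less_eq)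
      moreover have "t \<le> (real k + 1) / ?p" using c(3) by (simp add: le_divide_eq)
      ultimately show ?thesis using az w zz by (intro UnI2 UN_I[of k]) auto
    qed
  next
    fix z assume z: "z \<in> ({\<omega>\<in>space M. a < Yw \<omega> 0} \<times> {0}) \<union>
      (\<Union>k::nat. {\<omega>\<in>space M. a < Yw \<omega> (real k / ?p)} \<times> {real k / ?p<..(real k + 1) / ?p})"
    obtain \<omega> t where zz: "z = (\<omega>, t)" by (cases z)
    show "z \<in> {z \<in> space P. a < Zm m z}"
    proof (cases "t = 0")
      case True thus ?thesis using z zz by (auto simp: Zm_def space_P divide_less_0_iff)
    next
      case False
      then obtain k :: nat where k: "\<omega> \<in> space M" "a < Yw \<omega> (real k / ?p)" "real k / ?p < t" "t \<le> (real k + 1) / ?p"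
        using z zz by auto
      have tp: "t > 0" using k(3) by (rule le_less_trans[rotated]) simp
      have "real k < t * ?p" using k(3) by (simp add: divide_less_eq)
      moreover have "t * ?p \<le> real k + 1" using k(4) by (simp add: le_divide_eq)
      ultimately have "of_int (\<lceil>t * ?p\<rceil> - 1) = real k" by (rule ceil_unique)
      hence "Zm m (\<omega>, t) = Yw \<omega> (real k / ?p)" using tp by (simp add: Zm_def)
      thus ?thesis using k tp zz by (simp add: space_P)
    qed
  qed
  have "({\<omega>\<in>space M. a < Yw \<omega> 0} \<times> {0}) \<in> sets P" by (intro genP1 Fsets_Y) simp
  moreover have "(\<Union>k::nat. {\<omega>\<in>space M. a < Yw \<omega> (real k / ?p)} \<times> {real k / ?p<..(real k + 1) / ?p}) \<in> sets P"
  proof (rule sets.countable_UN, rule image_subsetI)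
    fix k :: nat
    show "{\<omega>\<in>space M. a < Yw \<omega> (real k / ?p)} \<times> {real k / ?p<..(real k + 1) / ?p} \<in> sets P"
      by (intro genP2 Fsets_Y) (auto simp: divide_strict_right_mono)
  qed
  ultimately show "{z \<in> space P. a < Zm m z} \<in> sets P" unfolding eq by auto
qed

lemma LL_meas: "LL \<in> borel_measurable P"
proof (rule borel_measurable_LIMSEQ_real[OF _ Zm_meas])
  fix z assume z: "z \<in> space P"
  obtain \<omega> t where zz: "z = (\<omega>, t)" by (cases z)
  have w: "\<omega> \<in> space M" and t: "0 \<le> t" using z zz by (auto simp: space_P)
  show "(\<lambda>m. Zm m z) \<longlonglongrightarrow> LL z"
  proof (cases "t = 0")
    case True thus ?thesis using zz by (simp add: Zm_def LL_def left_lim_def)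
  next
    case False
    hence tp: "t > 0" using t by simp
    interpret cpath "Yw \<omega>" by (rule cpath[OF w])
    have "(\<lambda>m. Yw \<omega> (of_int (\<lceil>t * 2 ^ m\<rceil> - 1) / 2 ^ m)) \<longlonglongrightarrow> left_lim (Yw \<omega>) t"
      using left_lim_tendsto[OF tp] approx_left[OF tp] by (rule filterlim_compose)
    thus ?thesis using zz tp by (simp add: Zm_def LL_def)
  qed
qed

lemma Y_random:
  assumes R: "R \<in> borel_measurable M" and R0: "\<And>\<omega>. \<omega> \<in> space M \<Longrightarrow> 0 \<le> R \<omega>"
  shows "(\<lambda>\<omega>. Yw \<omega> (R \<omega>)) \<in> borel_measurable M"
proof (rule borel_measurable_LIMSEQ_real)
  fix m :: nat
  let ?p = "(2::real) ^ m"
  have g: "(\<lambda>\<omega>. \<lfloor>R \<omega> * ?p\<rfloor>) \<in> measurable M (count_space UNIV)"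
    using R by measurable
  have f: "(\<lambda>\<omega>. Yw \<omega> (max 0 ((of_int i + 1) / ?p))) \<in> borel_measurable M" for i :: int
    by (rule Y_measM) simp
  have meas: "(\<lambda>\<omega>. Yw \<omega> (max 0 ((of_int \<lfloor>R \<omega> * ?p\<rfloor> + 1) / ?p))) \<in> borel_measurable M"
    using measurable_compose_countable[OF f g] .
  have eqm: "max 0 ((of_int \<lfloor>R \<omega> * ?p\<rfloor> + 1) / ?p) = (of_int \<lfloor>R \<omega> * ?p\<rfloor> + 1) / ?p"
    if "\<omega> \<in> space M" for \<omega>
  proof -
    have "0 \<le> R \<omega> * ?p" using R0[OF that] by simp
    hence "0 \<le> of_int \<lfloor>R \<omega> * ?p\<rfloor> + (1::real)" by linarith
    thus ?thesis by simp
  qed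
  have "(\<lambda>\<omega>. Yw \<omega> (max 0 ((of_int \<lfloor>R \<omega> * ?p\<rfloor> + 1) / ?p))) \<in> borel_measurable M \<longleftrightarrow>
    (\<lambda>\<omega>. Yw \<omega> ((of_int \<lfloor>R \<omega> * ?p\<rfloor> + 1) / ?p)) \<in> borel_measurable M"
    by (rule measurable_cong) (simp add: eqm)
  thus "(\<lambda>\<omega>. Yw \<omega> ((of_int \<lfloor>R \<omega> * ?p\<rfloor> + 1) / ?p)) \<in> borel_measurable M" using meas by simp
next
  fix \<omega> assume w: "\<omega> \<in> space M"
  interpret cpath "Yw \<omega>" by (rule cpath[OF w])
  have "(Yw \<omega> \<longlongrightarrow> Yw \<omega> (R \<omega>)) (at_right (R \<omega>))" using rc R0[OF w] by (simp add: continuous_within)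
  thus "(\<lambda>m. Yw \<omega> ((of_int \<lfloor>R \<omega> * 2 ^ m\<rfloor> + 1) / 2 ^ m)) \<longlonglongrightarrow> Yw \<omega> (R \<omega>)"
    using approx_right by (rule filterlim_compose)
qed

end



context setting
begin

lemma jm_sets: "sets (jump_measure X \<omega>) = sets borel"
  by (simp add: jump_measure_def)

lemma jm_zero:
  assumes f: "f \<in> borel_measurable borel"
    and z: "\<And>s. 0 < s \<Longrightarrow> jump (\<lambda>t. X t \<omega>) s \<noteq> 0 \<Longrightarrow> f (s, jump (\<lambda>t. X t \<omega>) s) = 0"
  shows "(\<integral>\<^sup>+ p. f p \<partial>jump_measure X \<omega>) = 0"
proof -
  let ?S = "{s. 0 < s \<and> jump (\<lambda>t. X t \<omega>) s \<noteq> 0}"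
  have "(\<integral>\<^sup>+ p. f p \<partial>jump_measure X \<omega>) = (\<integral>\<^sup>+ s. f (s, jump (\<lambda>t. X t \<omega>) s) \<partial>count_space ?S)"
    unfolding jump_measure_def by (rule nn_integral_distr) (simp_all add: f)
  also have "\<dots> = (\<integral>\<^sup>+ s. 0 \<partial>count_space ?S)" by (rule nn_integral_cong) (simp add: z)
  finally show ?thesis by simp
qed

lemma jm_ge1:
  assumes s: "0 < s" "jump (\<lambda>t. X t \<omega>) s \<noteq> 0" and f: "1 \<le> f (s, jump (\<lambda>t. X t \<omega>) s)"
  shows "1 \<le> (\<integral>\<^sup>+ p. f p \<partial>jump_measure X \<omega>)"
proof -
  let ?S = "{s. 0 < s \<and> jump (\<lambda>t. X t \<omega>) s \<noteq> 0}"
  let ?g = "\<lambda>s. (s, jump (\<lambda>t. X t \<omega>) s)"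
  have "emeasure (jump_measure X \<omega>) {?g s} = emeasure (count_space ?S) (?g -` {?g s} \<inter> space (count_space ?S))"
    unfolding jump_measure_def by (rule emeasure_distr) simp_all
  also have "?g -` {?g s} \<inter> space (count_space ?S) = {s}" using s by auto
  also have "emeasure (count_space ?S) {s} = 1" using s by simp
  finally have 1: "emeasure (jump_measure X \<omega>) {?g s} = 1" .
  have "(\<integral>\<^sup>+ p. indicator {?g s} p \<partial>jump_measure X \<omega>) = 1"
    using 1 by (subst nn_integral_indicator) (simp_all add: jm_sets)
  moreover have "(\<integral>\<^sup>+ p. indicator {?g s} p \<partial>jump_measure X \<omega>) \<le> (\<integral>\<^sup>+ p. f p \<partial>jump_measure X \<omega>)"
    using f by (intro nn_integral_mono) (auto split: split_indicator)
  ultimately show ?thesis by simp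
qed

lemma comp1: "\<omega> \<in> space M \<Longrightarrow> sets (\<nu> \<omega>) = sets borel"
  using comp by (simp add: compensator_def)

lemma comp2: "W \<in> borel_measurable (P \<Otimes>\<^sub>M borel) \<Longrightarrow>
  (\<lambda>(\<omega>, t). \<integral>\<^sup>+ p. indicator {..t} (fst p) * W ((\<omega>, fst p), snd p) \<partial>\<nu> \<omega>) \<in> borel_measurable P"
  using comp unfolding compensator_def by blast

lemma comp3: "W \<in> borel_measurable (P \<Otimes>\<^sub>M borel) \<Longrightarrow>
  (\<integral>\<^sup>+ \<omega>. (\<integral>\<^sup>+ p. W ((\<omega>, fst p), snd p) \<partial>jump_measure X \<omega>) \<partial>M) =
  (\<integral>\<^sup>+ \<omega>. (\<integral>\<^sup>+ p. W ((\<omega>, fst p), snd p) \<partial>\<nu> \<omega>) \<partial>M)"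
  using comp unfolding compensator_def by blast

lemma null_from_int:
  assumes E: "E \<in> sets M" and ge: "\<And>\<omega>. \<omega> \<in> E \<Longrightarrow> 1 \<le> f \<omega>" and int: "(\<integral>\<^sup>+ \<omega>. f \<omega> \<partial>M) = 0"
  shows "E \<in> null_sets M"
proof -
  have "emeasure M E = (\<integral>\<^sup>+ \<omega>. indicator E \<omega> \<partial>M)" using E by simp
  also have "\<dots> \<le> (\<integral>\<^sup>+ \<omega>. f \<omega> \<partial>M)" using ge by (intro nn_integral_mono) (auto split: split_indicator)
  finally show ?thesis using E int by auto
qed

lemma int_AE0: "AE \<omega> in M. g \<omega> = 0 \<Longrightarrow> (\<integral>\<^sup>+ \<omega>. g \<omega> \<partial>M) = 0"
proof -
  assume "AE \<omega> in M. g \<omega> = 0"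
  hence "(\<integral>\<^sup>+ \<omega>. g \<omega> \<partial>M) = (\<integral>\<^sup>+ \<omega>. 0 \<partial>M)" by (rule nn_integral_cong_AE)
  thus ?thesis by simp
qed

definition Dset :: "'a \<Rightarrow> bool" where
  "Dset \<omega> \<longleftrightarrow> hs (Yw \<omega>) < \<infinity> \<and> (\<forall>n. hn (Yw \<omega>) n < hs (Yw \<omega>))"

definition Gk :: "nat \<Rightarrow> ('a \<times> real) set" where
  "Gk k = {(\<omega>, t). \<omega> \<in> space M \<and> 0 \<le> t \<and> (\<forall>n. hn (Yw \<omega>) n < ereal t) \<and> ereal t \<le> hs (Yw \<omega>) \<and> t \<le> real k}"

lemma Gk_P: "Gk k \<in> sets P"
proof -
  have "Gk k = (\<Inter>n. afterP (\<lambda>\<omega>. hn (Yw \<omega>) n)) \<inter> uptoP (\<lambda>\<omega>. hs (Yw \<omega>)) \<inter> uptoP (\<lambda>_. ereal (real k))"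
    unfolding Gk_def afterP_def uptoP_def by auto
  also have "\<dots> \<in> sets P"
    using afterP_P[OF hn_stop] uptoP_P[OF hs_stop] uptoP_P[OF const_stop[of "real k"]]
    by (intro sets.Int sets.countable_INT) auto
  finally show ?thesis .
qed

lemma Gk_char:
  "(\<omega>, t) \<in> Gk k \<longleftrightarrow> \<omega> \<in> space M \<and> Dset \<omega> \<and> hs (Yw \<omega>) = ereal t \<and> t \<le> real k"
proof
  assume "(\<omega>, t) \<in> Gk k"
  hence w: "\<omega> \<in> space M" and t: "0 \<le> t" and lt: "\<forall>n. hn (Yw \<omega>) n < ereal t"
    and le: "ereal t \<le> hs (Yw \<omega>)" and tk: "t \<le> real k" unfolding Gk_def by auto
  have "hs (Yw \<omega>) \<le> ereal t" unfolding hs_def using lt by (intro SUP_least less_imp_le) auto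
  hence eq: "hs (Yw \<omega>) = ereal t" using le by simp
  show "\<omega> \<in> space M \<and> Dset \<omega> \<and> hs (Yw \<omega>) = ereal t \<and> t \<le> real k"
    using w eq lt tk unfolding Dset_def by simp
next
  assume H: "\<omega> \<in> space M \<and> Dset \<omega> \<and> hs (Yw \<omega>) = ereal t \<and> t \<le> real k"
  have "0 \<le> ereal t" using hs_ge0[of "Yw \<omega>"] H by simp
  moreover have a: "hs (Yw \<omega>) = ereal t" and b: "\<forall>n. hn (Yw \<omega>) n < hs (Yw \<omega>)"
    using H unfolding Dset_def by auto
  moreover have "\<forall>n. hn (Yw \<omega>) n < ereal t" using b unfolding a .
  ultimately show "(\<omega>, t) \<in> Gk k" using H unfolding Gk_def by simp
qed

end



context setting
begin

definition rr :: "'a \<Rightarrow> real" where "rr \<omega> = real_of_ereal (hs (Yw \<omega>))"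

lemma hn_meas[measurable]: "(\<lambda>\<omega>. hn (Yw \<omega>) n) \<in> borel_measurable M"
  by (rule stop_meas[OF hn_stop])
lemma hs_meas[measurable]: "(\<lambda>\<omega>. hs (Yw \<omega>)) \<in> borel_measurable M"
  by (rule stop_meas[OF hs_stop])
lemma rr_meas[measurable]: "rr \<in> borel_measurable M"
  unfolding rr_def by measurable
lemma rr_ge0: "0 \<le> rr \<omega>"
  unfolding rr_def using hs_ge0 by (simp add: real_of_ereal_pos)
lemma Yr_meas[measurable]: "(\<lambda>\<omega>. Yw \<omega> (rr \<omega>)) \<in> borel_measurable M"
  by (rule Y_random[OF rr_meas rr_ge0])

lemma Dset_meas[measurable]: "Measurable.pred M Dset"
  unfolding Dset_def by measurable

lemma Dset_fin: "Dset \<omega> \<Longrightarrow> hs (Yw \<omega>) = ereal (rr \<omega>)"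
  unfolding Dset_def rr_def using hs_ge0[of "Yw \<omega>"] by (cases "hs (Yw \<omega>)") auto

lemma Gk_char2: "\<omega> \<in> space M \<Longrightarrow> (\<omega>, t) \<in> Gk k \<longleftrightarrow> Dset \<omega> \<and> rr \<omega> \<le> real k \<and> t = rr \<omega>"
  using Gk_char[of \<omega> t k] Dset_fin[of \<omega>] by auto

lemma hit_eq_pw: "\<omega> \<in> space M \<Longrightarrow> Dset \<omega> \<Longrightarrow> left_lim (Yw \<omega>) (rr \<omega>) = 0 \<and> 0 < rr \<omega>"
  using cpath.K3[OF cpath, of \<omega> "rr \<omega>"] Dset_fin[of \<omega>] unfolding Dset_def by auto

lemma jump_at_rr: "\<omega> \<in> space M \<Longrightarrow> Dset \<omega> \<Longrightarrow> jump (\<lambda>t. X t \<omega>) (rr \<omega>) = Yw \<omega> (rr \<omega>)"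
  using hit_eq_pw[of \<omega>] jump_Y[of \<omega> "rr \<omega>"] by simp

definition Wg :: "nat \<Rightarrow> real set \<Rightarrow> ('a \<times> real) \<times> real \<Rightarrow> ennreal" where
  "Wg k B = indicator (Gk k \<times> B)"

lemma Wg_meas[measurable]: "B \<in> sets borel \<Longrightarrow> Wg k B \<in> borel_measurable (P \<Otimes>\<^sub>M borel)"
  unfolding Wg_def using Gk_P by (intro borel_measurable_indicator pair_measureI) auto

lemma Wg_pt: "\<omega> \<in> space M \<Longrightarrow> Wg k B ((\<omega>, t), x) = indicator {q. Dset \<omega> \<and> rr \<omega> \<le> real k \<and> fst q = rr \<omega> \<and> snd q \<in> B} (t, x)"
  unfolding Wg_def using Gk_char2[of \<omega> t k] by (auto split: split_indicator)

lemma Wg_sec_meas: "B \<in> sets borel \<Longrightarrow> \<omega> \<in> space M \<Longrightarrow> (\<lambda>q. Wg k B ((\<omega>, fst q), snd q)) \<in> borel_measurable borel"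
proof -
  assume B: "B \<in> sets borel" and w: "\<omega> \<in> space M"
  have eq: "(\<lambda>q. Wg k B ((\<omega>, fst q), snd q)) = indicator {q. Dset \<omega> \<and> rr \<omega> \<le> real k \<and> fst q = rr \<omega> \<and> snd q \<in> B}"
    using Wg_pt[OF w] by (auto simp: fun_eq_iff)
  have "{q::real\<times>real. Dset \<omega> \<and> rr \<omega> \<le> real k \<and> fst q = rr \<omega> \<and> snd q \<in> B} \<in> sets borel"
  proof (cases "Dset \<omega> \<and> rr \<omega> \<le> real k")
    case True
    have "{rr \<omega>} \<times> B \<in> sets (borel \<Otimes>\<^sub>M borel)" using B by (intro pair_measureI) auto
    hence "{rr \<omega>} \<times> B \<in> sets (borel :: (real \<times> real) measure)" by (simp only: borel_prod)
    moreover have "{q::real\<times>real. fst q = rr \<omega> \<and> snd q \<in> B} = {rr \<omega>} \<times> B" by auto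
    ultimately have "{q::real\<times>real. fst q = rr \<omega> \<and> snd q \<in> B} \<in> sets borel" by simp
    moreover have "{q::real\<times>real. Dset \<omega> \<and> rr \<omega> \<le> real k \<and> fst q = rr \<omega> \<and> snd q \<in> B} =
      {q::real\<times>real. fst q = rr \<omega> \<and> snd q \<in> B}" using True by blast
    ultimately show ?thesis by (simp only:)
  next
    case False
    hence "{q::real\<times>real. Dset \<omega> \<and> rr \<omega> \<le> real k \<and> fst q = rr \<omega> \<and> snd q \<in> B} = {}" by blast
    thus ?thesis by (simp only: sets.empty_sets)
  qed
  thus ?thesis unfolding eq by (rule borel_measurable_indicator)
qed

end



context setting
begin

lemma hs_lt_hit:
  assumes w: "\<omega> \<in> space M" and D: "Dset \<omega>" and neg: "Yw \<omega> (rr \<omega>) < 0"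
  shows "hs (Yw \<omega>) < hit (Yw \<omega>)"
proof (rule ccontr)
  assume "\<not> hs (Yw \<omega>) < hit (Yw \<omega>)"
  hence eq: "hit (Yw \<omega>) = ereal (rr \<omega>)" using hs_le_hit[of "Yw \<omega>"] Dset_fin[OF D] by simp
  interpret cpath "Yw \<omega>" by (rule cpath[OF w])
  have "hit (Yw \<omega>) < \<infinity>" using eq by simp
  then obtain r where "hit (Yw \<omega>) = ereal r" "0 < r" "0 \<le> Yw \<omega> r" by (rule hit_fin)
  thus False using eq neg by simp
qed

lemma ind_le_Gamma:
  assumes "\<And>q. f q \<le> indicator {..t} (fst q) * indicator (G \<omega>) q"
  shows "(\<integral>\<^sup>+ q. f q \<partial>\<nu> \<omega>) \<le> ind_integral \<nu> G t \<omega>"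
  unfolding ind_integral_def using assms by (intro nn_integral_mono) auto

lemma prem_k_null:
  fixes k :: nat
  assumes h1: "AE \<omega> in M. \<forall>t\<ge>0. ind_integral \<nu> (Gamma_minus X b) t \<omega> = 0"
  shows "{\<omega>\<in>space M. Dset \<omega> \<and> rr \<omega> \<le> real k \<and> Yw \<omega> (rr \<omega>) < 0} \<in> null_sets M"
proof -
  define B where "B = {..<0::real}"
  have Bb: "B \<in> sets borel" unfolding B_def by simp
  define W where "W = Wg k B"
  have Wm[measurable]: "W \<in> borel_measurable (P \<Otimes>\<^sub>M borel)" unfolding W_def by (rule Wg_meas[OF Bb])
  have Wpt: "\<And>\<omega> t x. \<omega> \<in> space M \<Longrightarrow> W ((\<omega>, t), x) = indicator {q. Dset \<omega> \<and> rr \<omega> \<le> real k \<and> fst q = rr \<omega> \<and> snd q \<in> B} (t, x)"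
    unfolding W_def by (rule Wg_pt)
  have Wsec: "\<And>\<omega>. \<omega> \<in> space M \<Longrightarrow> (\<lambda>q. W ((\<omega>, fst q), snd q)) \<in> borel_measurable borel"
    unfolding W_def by (rule Wg_sec_meas[OF Bb])
  define Kf where "Kf = (\<lambda>(\<omega>, t). \<integral>\<^sup>+ p. indicator {..t} (fst p) * W ((\<omega>, fst p), snd p) \<partial>\<nu> \<omega>)"
  have Km[measurable]: "Kf \<in> borel_measurable P" unfolding Kf_def by (rule comp2[OF Wm])
  define pw where "pw \<omega> = (\<integral>\<^sup>+ q. W ((\<omega>, fst q), snd q) \<partial>\<nu> \<omega>)" for \<omega>
  define mu where "mu \<omega> = (\<integral>\<^sup>+ q. W ((\<omega>, fst q), snd q) \<partial>jump_measure X \<omega>)" for \<omega>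
  define W2 where "W2 z = Kf (fst z) * W z" for z
  have W2m: "W2 \<in> borel_measurable (P \<Otimes>\<^sub>M borel)" unfolding W2_def by measurable

  have C: "Kf (\<omega>, t) * W ((\<omega>, t), x) = pw \<omega> * W ((\<omega>, t), x)" if w: "\<omega> \<in> space M" for \<omega> t x
  proof (cases "W ((\<omega>, t), x) = 0")
    case False
    hence H: "Dset \<omega> \<and> rr \<omega> \<le> real k \<and> t = rr \<omega>" using Wpt[OF w] by (auto split: split_indicator_asm)
    have "Kf (\<omega>, t) = pw \<omega>" unfolding Kf_def pw_def
    proof (simp, rule nn_integral_cong)
      fix q :: "real \<times> real"
      show "indicator {..t} (fst q) * W ((\<omega>, fst q), snd q) = W ((\<omega>, fst q), snd q)"
        using Wpt[OF w, of "fst q" "snd q"] H by (auto split: split_indicator)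
    qed
    thus ?thesis by simp
  qed simp

  have Dk: "pw \<omega> = Kf (\<omega>, real k)" if w: "\<omega> \<in> space M" for \<omega>
    unfolding Kf_def pw_def
  proof (simp, rule nn_integral_cong)
    fix q :: "real \<times> real"
    show "W ((\<omega>, fst q), snd q) = indicator {..real k} (fst q) * W ((\<omega>, fst q), snd q)"
      using Wpt[OF w, of "fst q" "snd q"] by (auto split: split_indicator)
  qed
  have pwm: "pw \<in> borel_measurable M"
  proof -
    have "(\<lambda>\<omega>. Kf (\<omega>, real k)) \<in> borel_measurable M"
      by (rule measurable_compose[OF section_meas Km]) simp
    thus ?thesis by (subst measurable_cong[OF Dk]) auto
  qed

  have nuW2: "(\<integral>\<^sup>+ q. W2 ((\<omega>, fst q), snd q) \<partial>\<nu> \<omega>) = pw \<omega> * pw \<omega>" if w: "\<omega> \<in> space M" for \<omega>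
  proof -
    have "(\<integral>\<^sup>+ q. W2 ((\<omega>, fst q), snd q) \<partial>\<nu> \<omega>) = (\<integral>\<^sup>+ q. pw \<omega> * W ((\<omega>, fst q), snd q) \<partial>\<nu> \<omega>)"
      unfolding W2_def using C[OF w] by (intro nn_integral_cong) simp
    also have "\<dots> = pw \<omega> * pw \<omega>" unfolding pw_def
      by (rule nn_integral_cmult) (simp add: measurable_cong_sets[OF comp1[OF w] refl] Wsec[OF w])
    finally show ?thesis .
  qed
  have muW2: "(\<integral>\<^sup>+ q. W2 ((\<omega>, fst q), snd q) \<partial>jump_measure X \<omega>) = pw \<omega> * mu \<omega>" if w: "\<omega> \<in> space M" for \<omega>
  proof -
    have "(\<integral>\<^sup>+ q. W2 ((\<omega>, fst q), snd q) \<partial>jump_measure X \<omega>) = (\<integral>\<^sup>+ q. pw \<omega> * W ((\<omega>, fst q), snd q) \<partial>jump_measure X \<omega>)"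
      unfolding W2_def using C[OF w] by (intro nn_integral_cong) simp
    also have "\<dots> = pw \<omega> * mu \<omega>" unfolding mu_def
      by (rule nn_integral_cmult) (simp add: measurable_cong_sets[OF jm_sets refl] Wsec[OF w])
    finally show ?thesis .
  qed

  define E where "E = {\<omega>\<in>space M. Dset \<omega> \<and> rr \<omega> \<le> real k \<and> Yw \<omega> (rr \<omega>) < 0}"

  have pwE: "pw \<omega> = 0" if w: "\<omega> \<in> space M" and hw: "\<forall>t\<ge>0. ind_integral \<nu> (Gamma_minus X b) t \<omega> = 0"
    and E: "\<omega> \<in> E" for \<omega>
  proof -
    have D: "Dset \<omega>" and rk: "rr \<omega> \<le> real k" and neg: "Yw \<omega> (rr \<omega>) < 0" using E by (auto simp: E_def)
    have lt: "ereal (rr \<omega>) < hit_time X b \<omega>"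
      using hs_lt_hit[OF w D neg] Dset_fin[OF D] by (simp add: hit_time_eq)
    have ll: "left_lim (Yw \<omega>) (rr \<omega>) = 0" and rp: "0 < rr \<omega>" using hit_eq_pw[OF w D] by auto
    have llX: "left_lim (\<lambda>s. X s \<omega>) (rr \<omega>) = b (rr \<omega>)" using Y_ll[OF w rp] ll by simp
    have "pw \<omega> \<le> ind_integral \<nu> (Gamma_minus X b) (real k) \<omega>" unfolding pw_def
    proof (rule ind_le_Gamma)
      fix q :: "real \<times> real"
      show "W ((\<omega>, fst q), snd q) \<le> indicator {..real k} (fst q) * indicator (Gamma_minus X b \<omega>) q"
        using Wpt[OF w, of "fst q" "snd q"] lt llX rk unfolding Gamma_minus_def B_def
        by (cases q) (auto split: split_indicator)
    qed
    thus ?thesis using hw by simp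
  qed
  have muE: "mu \<omega> = 0" if w: "\<omega> \<in> space M" and nE: "\<omega> \<notin> E" for \<omega>
    unfolding mu_def
  proof (rule jm_zero[OF Wsec[OF w]])
    fix s assume s: "0 < s" "jump (\<lambda>t. X t \<omega>) s \<noteq> 0"
    show "W ((\<omega>, fst (s, jump (\<lambda>t. X t \<omega>) s)), snd (s, jump (\<lambda>t. X t \<omega>) s)) = 0"
    proof (rule ccontr)
      assume "W ((\<omega>, fst (s, jump (\<lambda>t. X t \<omega>) s)), snd (s, jump (\<lambda>t. X t \<omega>) s)) \<noteq> 0"
      hence H: "Dset \<omega>" "rr \<omega> \<le> real k" "s = rr \<omega>" "jump (\<lambda>t. X t \<omega>) s < 0"
        using Wpt[OF w] unfolding B_def by (auto split: split_indicator_asm)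
      have "Yw \<omega> (rr \<omega>) < 0" using H jump_at_rr[OF w H(1)] by simp
      thus False using nE w H unfolding E_def by simp
    qed
  qed
  have AEprod: "AE \<omega> in M. pw \<omega> * mu \<omega> = 0"
  proof (rule AE_mp[OF h1 AE_I2], rule impI)
    fix \<omega> assume w: "\<omega> \<in> space M" and hw: "\<forall>t\<ge>0. ind_integral \<nu> (Gamma_minus X b) t \<omega> = 0"
    show "pw \<omega> * mu \<omega> = 0"
    proof (cases "\<omega> \<in> E")
      case True thus ?thesis using pwE[OF w hw] by simp
    next
      case False thus ?thesis using muE[OF w] by simp
    qed
  qed
  have int2: "(\<integral>\<^sup>+\<omega>. pw \<omega> * pw \<omega> \<partial>M) = 0"
  proof -
    have "(\<integral>\<^sup>+\<omega>. pw \<omega> * pw \<omega> \<partial>M) = (\<integral>\<^sup>+\<omega>. (\<integral>\<^sup>+q. W2 ((\<omega>, fst q), snd q) \<partial>\<nu> \<omega>) \<partial>M)"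
      by (rule nn_integral_cong) (simp add: nuW2)
    also have "\<dots> = (\<integral>\<^sup>+\<omega>. (\<integral>\<^sup>+q. W2 ((\<omega>, fst q), snd q) \<partial>jump_measure X \<omega>) \<partial>M)"
      by (rule comp3[OF W2m, symmetric])
    also have "\<dots> = (\<integral>\<^sup>+\<omega>. pw \<omega> * mu \<omega> \<partial>M)" by (rule nn_integral_cong) (simp add: muW2)
    also have "\<dots> = 0" by (rule int_AE0[OF AEprod])
    finally show ?thesis .
  qed
  have pw2m: "(\<lambda>\<omega>. pw \<omega> * pw \<omega>) \<in> borel_measurable M" using pwm by measurable
  have "AE \<omega> in M. pw \<omega> * pw \<omega> = 0" using int2 nn_integral_0_iff_AE[OF pw2m] by simp
  hence AEpw: "AE \<omega> in M. pw \<omega> = 0" by eventually_elim simp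
  have intmu: "(\<integral>\<^sup>+\<omega>. mu \<omega> \<partial>M) = 0"
  proof -
    have "(\<integral>\<^sup>+\<omega>. mu \<omega> \<partial>M) = (\<integral>\<^sup>+\<omega>. pw \<omega> \<partial>M)" unfolding mu_def pw_def by (rule comp3[OF Wm])
    also have "\<dots> = 0" by (rule int_AE0[OF AEpw])
    finally show ?thesis .
  qed
  have Em: "E \<in> sets M" unfolding E_def by measurable
  have "E \<in> null_sets M"
  proof (rule null_from_int[OF Em _ intmu])
    fix \<omega> assume e: "\<omega> \<in> E"
    hence w: "\<omega> \<in> space M" and D: "Dset \<omega>" and rk: "rr \<omega> \<le> real k" and neg: "Yw \<omega> (rr \<omega>) < 0"
      by (auto simp: E_def)
    have rp: "0 < rr \<omega>" using hit_eq_pw[OF w D] by simp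
    have j: "jump (\<lambda>t. X t \<omega>) (rr \<omega>) = Yw \<omega> (rr \<omega>)" by (rule jump_at_rr[OF w D])
    show "1 \<le> mu \<omega>" unfolding mu_def
    proof (rule jm_ge1[where f="\<lambda>q. W ((\<omega>, fst q), snd q)" and s="rr \<omega>"])
      show "0 < rr \<omega>" by fact
      show "jump (\<lambda>t. X t \<omega>) (rr \<omega>) \<noteq> 0" using j neg by simp
      show "1 \<le> W ((\<omega>, fst (rr \<omega>, jump (\<lambda>t. X t \<omega>) (rr \<omega>))), snd (rr \<omega>, jump (\<lambda>t. X t \<omega>) (rr \<omega>)))"
        using Wpt[OF w] D rk j neg unfolding B_def by (simp add: indicator_def)
    qed
  qed
  thus ?thesis unfolding E_def .
qed

end



context setting
begin

definition prem :: "'a set" where "prem = {\<omega>\<in>space M. hs (Yw \<omega>) < hit (Yw \<omega>)}"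

lemma cm: "A \<subseteq> B \<Longrightarrow> B \<in> null_sets M \<Longrightarrow> A \<in> null_sets M"
  using complete_measure.complete2[OF complete] .

lemma exk: "\<exists>k::nat. r \<le> real k" using real_arch_simple by blast

lemma prem_null:
  assumes h1: "AE \<omega> in M. \<forall>t\<ge>0. ind_integral \<nu> (Gamma_minus X b) t \<omega> = 0"
  shows "prem \<in> null_sets M"
proof (rule cm)
  show "(\<Union>k. {\<omega>\<in>space M. Dset \<omega> \<and> rr \<omega> \<le> real k \<and> Yw \<omega> (rr \<omega>) < 0}) \<in> null_sets M"
    using prem_k_null[OF h1] by (intro null_sets_UN) auto
  show "prem \<subseteq> (\<Union>k. {\<omega>\<in>space M. Dset \<omega> \<and> rr \<omega> \<le> real k \<and> Yw \<omega> (rr \<omega>) < 0})"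
  proof
    fix \<omega> assume p: "\<omega> \<in> prem"
    hence w: "\<omega> \<in> space M" and lt: "hs (Yw \<omega>) < hit (Yw \<omega>)" by (auto simp: prem_def)
    interpret cpath "Yw \<omega>" by (rule cpath[OF w])
    obtain r where r: "hs (Yw \<omega>) = ereal r" "\<forall>n. hn (Yw \<omega>) n < hs (Yw \<omega>)" "Yw \<omega> r < 0"
      using K2[OF lt] by blast
    have D: "Dset \<omega>" using r unfolding Dset_def by simp
    have rr: "rr \<omega> = r" using r by (simp add: rr_def)
    obtain k :: nat where "r \<le> real k" using exk by blast
    thus "\<omega> \<in> (\<Union>k. {\<omega>\<in>space M. Dset \<omega> \<and> rr \<omega> \<le> real k \<and> Yw \<omega> (rr \<omega>) < 0})"
      using w D rr r by auto
  qed
qed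

lemma simple_null:
  assumes Wm: "W \<in> borel_measurable (P \<Otimes>\<^sub>M borel)"
    and AEnu: "AE \<omega> in M. (\<integral>\<^sup>+ q. W ((\<omega>, fst q), snd q) \<partial>\<nu> \<omega>) = 0"
    and E: "E \<in> sets M" and ge: "\<And>\<omega>. \<omega> \<in> E \<Longrightarrow> 1 \<le> (\<integral>\<^sup>+ q. W ((\<omega>, fst q), snd q) \<partial>jump_measure X \<omega>)"
  shows "E \<in> null_sets M"
proof (rule null_from_int[OF E ge])
  have "(\<integral>\<^sup>+ \<omega>. (\<integral>\<^sup>+ q. W ((\<omega>, fst q), snd q) \<partial>jump_measure X \<omega>) \<partial>M) =
    (\<integral>\<^sup>+ \<omega>. (\<integral>\<^sup>+ q. W ((\<omega>, fst q), snd q) \<partial>\<nu> \<omega>) \<partial>M)" by (rule comp3[OF Wm])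
  also have "\<dots> = 0" by (rule int_AE0[OF AEnu])
  finally show "(\<integral>\<^sup>+ \<omega>. (\<integral>\<^sup>+ q. W ((\<omega>, fst q), snd q) \<partial>jump_measure X \<omega>) \<partial>M) = 0" .
qed

lemma AE_le0:
  assumes h: "AE \<omega> in M. \<forall>t\<ge>0. ind_integral \<nu> G t \<omega> = 0"
    and le: "\<And>\<omega> q. \<omega> \<in> space M \<Longrightarrow> W ((\<omega>, fst q), snd q) \<le> indicator {..c} (fst q) * indicator (G \<omega>) q"
    and c: "0 \<le> c"
  shows "AE \<omega> in M. (\<integral>\<^sup>+ q. W ((\<omega>, fst q), snd q) \<partial>\<nu> \<omega>) = 0"
proof (rule AE_mp[OF h AE_I2], rule impI)
  fix \<omega> assume w: "\<omega> \<in> space M" and hw: "\<forall>t\<ge>0. ind_integral \<nu> G t \<omega> = 0"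
  have "(\<integral>\<^sup>+ q. W ((\<omega>, fst q), snd q) \<partial>\<nu> \<omega>) \<le> ind_integral \<nu> G c \<omega>"
    by (rule ind_le_Gamma) (rule le[OF w])
  thus "(\<integral>\<^sup>+ q. W ((\<omega>, fst q), snd q) \<partial>\<nu> \<omega>) = 0" using hw c by simp
qed

lemma Cplus_k_null:
  fixes k :: nat
  assumes h2: "AE \<omega> in M. \<forall>t\<ge>0. ind_integral \<nu> (Gamma_plus X b) t \<omega> = 0"
  shows "{\<omega>\<in>space M. Dset \<omega> \<and> rr \<omega> \<le> real k \<and> 0 < Yw \<omega> (rr \<omega>)} \<in> null_sets M"
proof (rule simple_null)
  define B where "B = {0::real<..}"
  have Bb: "B \<in> sets borel" unfolding B_def by simp
  show "Wg k B \<in> borel_measurable (P \<Otimes>\<^sub>M borel)" by (rule Wg_meas[OF Bb])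
  show "AE \<omega> in M. (\<integral>\<^sup>+ q. Wg k B ((\<omega>, fst q), snd q) \<partial>\<nu> \<omega>) = 0"
  proof (rule AE_le0[OF h2])
    fix \<omega> q assume w: "\<omega> \<in> space M"
    show "Wg k B ((\<omega>, fst q), snd q) \<le> indicator {..real k} (fst q) * indicator (Gamma_plus X b \<omega>) q"
    proof (cases "Dset \<omega>")
      case True
      have ll: "left_lim (Yw \<omega>) (rr \<omega>) = 0" and rp: "0 < rr \<omega>" using hit_eq_pw[OF w True] by auto
      have llX: "left_lim (\<lambda>s. X s \<omega>) (rr \<omega>) = b (rr \<omega>)" using Y_ll[OF w rp] ll by simp
      show ?thesis using Wg_pt[OF w, of k B "fst q" "snd q"] llX unfolding Gamma_plus_def B_def
        by (cases q) (auto split: split_indicator)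
    next
      case False
      thus ?thesis using Wg_pt[OF w, of k B "fst q" "snd q"] by (simp add: indicator_def)
    qed
  qed simp
  show "{\<omega>\<in>space M. Dset \<omega> \<and> rr \<omega> \<le> real k \<and> 0 < Yw \<omega> (rr \<omega>)} \<in> sets M" by measurable
  fix \<omega> assume e: "\<omega> \<in> {\<omega>\<in>space M. Dset \<omega> \<and> rr \<omega> \<le> real k \<and> 0 < Yw \<omega> (rr \<omega>)}"
  hence w: "\<omega> \<in> space M" and D: "Dset \<omega>" and rk: "rr \<omega> \<le> real k" and pos: "0 < Yw \<omega> (rr \<omega>)" by auto
  have rp: "0 < rr \<omega>" using hit_eq_pw[OF w D] by simp
  have j: "jump (\<lambda>t. X t \<omega>) (rr \<omega>) = Yw \<omega> (rr \<omega>)" by (rule jump_at_rr[OF w D])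
  show "1 \<le> (\<integral>\<^sup>+ q. Wg k B ((\<omega>, fst q), snd q) \<partial>jump_measure X \<omega>)"
  proof (rule jm_ge1[where f="\<lambda>q. Wg k B ((\<omega>, fst q), snd q)" and s="rr \<omega>"])
    show "0 < rr \<omega>" by fact
    show "jump (\<lambda>t. X t \<omega>) (rr \<omega>) \<noteq> 0" using j pos by simp
    show "1 \<le> Wg k B ((\<omega>, fst (rr \<omega>, jump (\<lambda>t. X t \<omega>) (rr \<omega>))), snd (rr \<omega>, jump (\<lambda>t. X t \<omega>) (rr \<omega>)))"
      using Wg_pt[OF w] D rk j pos unfolding B_def by (simp add: indicator_def)
  qed
qed

end



context setting
begin

lemma strip_P: "space M \<times> {0<..c} \<in> sets P"
proof (cases "0 < c")
  case True thus ?thesis using genP2[OF space_F0, of c] by simp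
next
  case False
  hence "space M \<times> {0<..c} = {}" by auto
  thus ?thesis by (simp only: sets.empty_sets)
qed

definition A4 :: "nat \<Rightarrow> (('a \<times> real) \<times> real) set" where
  "A4 k = {z. fst (fst z) \<in> space M \<and> 0 < snd (fst z) \<and> snd (fst z) \<le> real k \<and> LL (fst z) < 0 \<and> snd z = - LL (fst z)}"

lemma A4_sets: "A4 k \<in> sets (P \<Otimes>\<^sub>M borel)"
proof -
  note LL_meas[measurable]
  have 1: "(space M \<times> {0<..real k}) \<times> UNIV \<in> sets (P \<Otimes>\<^sub>M borel)"
    using strip_P by (intro pair_measureI) auto
  have 2: "{z \<in> space (P \<Otimes>\<^sub>M borel). LL (fst z) < 0 \<and> snd z = - LL (fst z)} \<in> sets (P \<Otimes>\<^sub>M borel)"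
    by measurable
  have "A4 k = ((space M \<times> {0<..real k}) \<times> UNIV) \<inter> {z \<in> space (P \<Otimes>\<^sub>M borel). LL (fst z) < 0 \<and> snd z = - LL (fst z)}"
    unfolding A4_def by (auto simp: space_pair_measure space_P)
  moreover have "((space M \<times> {0<..real k}) \<times> UNIV) \<inter> {z \<in> space (P \<Otimes>\<^sub>M borel). LL (fst z) < 0 \<and> snd z = - LL (fst z)} \<in> sets (P \<Otimes>\<^sub>M borel)"
    by (rule sets.Int[OF 1 2])
  ultimately show ?thesis by (simp only:)
qed

lemma J0_k_null:
  fixes k :: nat
  assumes h3: "AE \<omega> in M. \<forall>t\<ge>0. ind_integral \<nu> (Gamma_zero X b) t \<omega> = 0"
  shows "{\<omega>\<in>space M. hs (Yw \<omega>) < \<infinity> \<and> rr \<omega> \<le> real k \<and> (\<exists>n. hn (Yw \<omega>) n = hs (Yw \<omega>)) \<and> Yw \<omega> (rr \<omega>) = 0} \<in> null_sets M"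
proof (rule simple_null)
  show "indicator (A4 k) \<in> borel_measurable (P \<Otimes>\<^sub>M borel)" using A4_sets by simp
  show "AE \<omega> in M. (\<integral>\<^sup>+ q. indicator (A4 k) ((\<omega>, fst q), snd q) \<partial>\<nu> \<omega>) = 0"
  proof (rule AE_le0[OF h3])
    fix \<omega> and q :: "real \<times> real" assume w: "\<omega> \<in> space M"
    show "indicator (A4 k) ((\<omega>, fst q), snd q) \<le> (indicator {..real k} (fst q) * indicator (Gamma_zero X b \<omega>) q :: ennreal)"
    proof (cases "((\<omega>, fst q), snd q) \<in> A4 k")
      case True
      hence t: "0 < fst q" "fst q \<le> real k" and l: "LL (\<omega>, fst q) < 0" "snd q = - LL (\<omega>, fst q)"
        unfolding A4_def by auto
      have "LL (\<omega>, fst q) = left_lim (\<lambda>s. X s \<omega>) (fst q) - b (fst q)"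
        unfolding LL_def using Y_ll[OF w t(1)] by simp
      hence "q \<in> Gamma_zero X b \<omega>" using l unfolding Gamma_zero_def by (cases q) auto
      thus ?thesis using t by (simp add: indicator_def)
    qed simp
  qed simp
  show "{\<omega>\<in>space M. hs (Yw \<omega>) < \<infinity> \<and> rr \<omega> \<le> real k \<and> (\<exists>n. hn (Yw \<omega>) n = hs (Yw \<omega>)) \<and> Yw \<omega> (rr \<omega>) = 0} \<in> sets M"
    by measurable
  fix \<omega> assume e: "\<omega> \<in> {\<omega>\<in>space M. hs (Yw \<omega>) < \<infinity> \<and> rr \<omega> \<le> real k \<and> (\<exists>n. hn (Yw \<omega>) n = hs (Yw \<omega>)) \<and> Yw \<omega> (rr \<omega>) = 0}"
  hence w: "\<omega> \<in> space M" and fin: "hs (Yw \<omega>) < \<infinity>" and rk: "rr \<omega> \<le> real k"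
    and ex: "\<exists>n. hn (Yw \<omega>) n = hs (Yw \<omega>)" and z: "Yw \<omega> (rr \<omega>) = 0" by auto
  have hsr: "hs (Yw \<omega>) = ereal (rr \<omega>)" using fin hs_ge0[of "Yw \<omega>"] unfolding rr_def by (cases "hs (Yw \<omega>)") auto
  obtain n where n: "hn (Yw \<omega>) n = hs (Yw \<omega>)" using ex by blast
  interpret cpath "Yw \<omega>" by (rule cpath[OF w])
  have llneg: "left_lim (Yw \<omega>) (rr \<omega>) < 0" and rp: "0 < rr \<omega>" using K5[OF hsr n] by auto
  have j: "jump (\<lambda>t. X t \<omega>) (rr \<omega>) = - left_lim (Yw \<omega>) (rr \<omega>)" using jump_Y[OF w rp] z by simp
  show "1 \<le> (\<integral>\<^sup>+ q. indicator (A4 k) ((\<omega>, fst q), snd q) \<partial>jump_measure X \<omega>)"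
  proof (rule jm_ge1[where f="\<lambda>q. indicator (A4 k) ((\<omega>, fst q), snd q)" and s="rr \<omega>"])
    show "0 < rr \<omega>" by fact
    show "jump (\<lambda>t. X t \<omega>) (rr \<omega>) \<noteq> 0" using j llneg by simp
    have "((\<omega>, rr \<omega>), jump (\<lambda>t. X t \<omega>) (rr \<omega>)) \<in> A4 k"
      unfolding A4_def LL_def using w rp rk llneg j by simp
    thus "1 \<le> (indicator (A4 k) ((\<omega>, fst (rr \<omega>, jump (\<lambda>t. X t \<omega>) (rr \<omega>))), snd (rr \<omega>, jump (\<lambda>t. X t \<omega>) (rr \<omega>))) :: ennreal)"
      by simp
  qed
qed

end



context setting
begin

lemma Ytm: "Y_tau_minus X b \<omega> = left_lim (Yw \<omega>) (real_of_ereal (hit (Yw \<omega>)))"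
  unfolding Y_tau_minus_def hit_time_eq by (simp add: Yw_def)
lemma Yt: "Y_tau X b \<omega> = Yw \<omega> (real_of_ereal (hit (Yw \<omega>)))"
  unfolding Y_tau_def hit_time_eq by (simp add: Yw_def)

lemma not_prem_eq: "\<omega> \<in> space M \<Longrightarrow> \<omega> \<notin> prem \<Longrightarrow> hs (Yw \<omega>) = hit (Yw \<omega>)"
  unfolding prem_def using hs_le_hit[of "Yw \<omega>"] by auto

lemma R1:
  assumes h1: "AE \<omega> in M. \<forall>t\<ge>0. ind_integral \<nu> (Gamma_minus X b) t \<omega> = 0"
  shows "AE \<omega> in M. \<forall>t\<ge>0. ereal t < hit_time X b \<omega> \<longrightarrow> (SUP s\<in>{0..t}. Yp X b s \<omega>) < 0"
proof (rule AE_I'[OF prem_null[OF h1]])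
  show "{\<omega> \<in> space M. \<not> (\<forall>t\<ge>0. ereal t < hit_time X b \<omega> \<longrightarrow> (SUP s\<in>{0..t}. Yp X b s \<omega>) < 0)} \<subseteq> prem"
  proof (rule subsetI, rule ccontr)
    fix \<omega> assume a: "\<omega> \<in> {\<omega> \<in> space M. \<not> (\<forall>t\<ge>0. ereal t < hit_time X b \<omega> \<longrightarrow> (SUP s\<in>{0..t}. Yp X b s \<omega>) < 0)}"
      and np: "\<omega> \<notin> prem"
    from a have w: "\<omega> \<in> space M" by simp
    from a obtain t where t: "0 \<le> t" "ereal t < hit_time X b \<omega>" "\<not> (SUP s\<in>{0..t}. Yp X b s \<omega>) < 0" by auto
    have "ereal t < hs (Yw \<omega>)" using t(2) not_prem_eq[OF w np] by (simp add: hit_time_eq)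
    hence "(SUP s\<in>{0..t}. Yw \<omega> s) < 0" using cpath.K1[OF cpath[OF w] t(1)] by simp
    thus False using t(3) by (simp add: Yw_def)
  qed
qed

lemma R2:
  assumes h1: "AE \<omega> in M. \<forall>t\<ge>0. ind_integral \<nu> (Gamma_minus X b) t \<omega> = 0"
    and h2: "AE \<omega> in M. \<forall>t\<ge>0. ind_integral \<nu> (Gamma_plus X b) t \<omega> = 0"
  shows "C_plus M X b \<in> null_sets M"
proof (rule cm)
  show "prem \<union> (\<Union>k. {\<omega>\<in>space M. Dset \<omega> \<and> rr \<omega> \<le> real k \<and> 0 < Yw \<omega> (rr \<omega>)}) \<in> null_sets M"
    using prem_null[OF h1] Cplus_k_null[OF h2] by (intro null_sets.Un null_sets_UN) auto
  show "C_plus M X b \<subseteq> prem \<union> (\<Union>k. {\<omega>\<in>space M. Dset \<omega> \<and> rr \<omega> \<le> real k \<and> 0 < Yw \<omega> (rr \<omega>)})"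
  proof
    fix \<omega> assume c: "\<omega> \<in> C_plus M X b"
    hence w: "\<omega> \<in> space M" and fin: "hit (Yw \<omega>) < \<infinity>" and tm: "Y_tau_minus X b \<omega> = 0"
      and tp: "0 < Y_tau X b \<omega>" by (auto simp: C_plus_def hit_time_eq)
    show "\<omega> \<in> prem \<union> (\<Union>k. {\<omega>\<in>space M. Dset \<omega> \<and> rr \<omega> \<le> real k \<and> 0 < Yw \<omega> (rr \<omega>)})"
    proof (cases "\<omega> \<in> prem")
      case False
      interpret cpath "Yw \<omega>" by (rule cpath[OF w])
      obtain r where r: "hit (Yw \<omega>) = ereal r" "0 < r" "0 \<le> Yw \<omega> r" using fin by (rule hit_fin)
      have eq: "hs (Yw \<omega>) = hit (Yw \<omega>)" by (rule not_prem_eq[OF w False])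
      have ll: "left_lim (Yw \<omega>) r = 0" using tm r by (simp add: Ytm)
      have "\<forall>n. hn (Yw \<omega>) n < hs (Yw \<omega>)" using K4[OF r(1,2) ll] eq by simp
      hence D: "Dset \<omega>" using eq r unfolding Dset_def by simp
      have rr: "rr \<omega> = r" using eq r by (simp add: rr_def)
      obtain k :: nat where "r \<le> real k" using exk by blast
      thus ?thesis using w D rr tp r by (auto simp: Yt)
    qed simp
  qed
qed

lemma R3:
  assumes h1: "AE \<omega> in M. \<forall>t\<ge>0. ind_integral \<nu> (Gamma_minus X b) t \<omega> = 0"
    and h3: "AE \<omega> in M. \<forall>t\<ge>0. ind_integral \<nu> (Gamma_zero X b) t \<omega> = 0"
  shows "J_zero M X b \<in> null_sets M"
proof (rule cm)
  show "prem \<union> (\<Union>k. {\<omega>\<in>space M. hs (Yw \<omega>) < \<infinity> \<and> rr \<omega> \<le> real k \<and> (\<exists>n. hn (Yw \<omega>) n = hs (Yw \<omega>)) \<and> Yw \<omega> (rr \<omega>) = 0}) \<in> null_sets M"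
    using prem_null[OF h1] J0_k_null[OF h3] by (intro null_sets.Un null_sets_UN) auto
  show "J_zero M X b \<subseteq> prem \<union> (\<Union>k. {\<omega>\<in>space M. hs (Yw \<omega>) < \<infinity> \<and> rr \<omega> \<le> real k \<and> (\<exists>n. hn (Yw \<omega>) n = hs (Yw \<omega>)) \<and> Yw \<omega> (rr \<omega>) = 0})"
  proof
    fix \<omega> assume c: "\<omega> \<in> J_zero M X b"
    hence w: "\<omega> \<in> space M" and fin: "hit (Yw \<omega>) < \<infinity>" and tm: "Y_tau_minus X b \<omega> < 0"
      and tz: "Y_tau X b \<omega> = 0" by (auto simp: J_zero_def hit_time_eq)
    show "\<omega> \<in> prem \<union> (\<Union>k. {\<omega>\<in>space M. hs (Yw \<omega>) < \<infinity> \<and> rr \<omega> \<le> real k \<and> (\<exists>n. hn (Yw \<omega>) n = hs (Yw \<omega>)) \<and> Yw \<omega> (rr \<omega>) = 0})"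
    proof (cases "\<omega> \<in> prem")
      case False
      interpret cpath "Yw \<omega>" by (rule cpath[OF w])
      obtain r where r: "hit (Yw \<omega>) = ereal r" "0 < r" "0 \<le> Yw \<omega> r" using fin by (rule hit_fin)
      have eq: "hs (Yw \<omega>) = hit (Yw \<omega>)" by (rule not_prem_eq[OF w False])
      have hsr: "hs (Yw \<omega>) = ereal r" using eq r by simp
      have ll: "left_lim (Yw \<omega>) r < 0" using tm r by (simp add: Ytm)
      have ex: "\<exists>n. hn (Yw \<omega>) n = hs (Yw \<omega>)"
      proof (rule ccontr)
        assume "\<not> (\<exists>n. hn (Yw \<omega>) n = hs (Yw \<omega>))"
        hence "\<forall>n. hn (Yw \<omega>) n < hs (Yw \<omega>)" using hn_le_hs[of "Yw \<omega>"] by (auto simp: order.order_iff_strict)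
        hence "left_lim (Yw \<omega>) r = 0" using K3(1)[OF hsr] by simp
        thus False using ll by simp
      qed
      have rr: "rr \<omega> = r" using hsr by (simp add: rr_def)
      obtain k :: nat where "r \<le> real k" using exk by blast
      thus ?thesis using w rr tz r hsr ex by (auto simp: Yt)
    qed simp
  qed
qed

lemma R5:
  assumes h1: "AE \<omega> in M. \<forall>t\<ge>0. ind_integral \<nu> (Gamma_minus X b) t \<omega> = 0"
    and h2: "AE \<omega> in M. \<forall>t\<ge>0. ind_integral \<nu> (Gamma_plus X b) t \<omega> = 0"
    and h3: "AE \<omega> in M. \<forall>t\<ge>0. ind_integral \<nu> (Gamma_zero X b) t \<omega> = 0"
  shows "AE \<omega> in M. hit_time X b \<omega> < \<infinity> \<longleftrightarrow> \<omega> \<in> C_zero M X b \<union> J_plus M X b"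
proof (rule AE_I'[OF null_sets.Un[OF R2[OF h1 h2] R3[OF h1 h3]]])
  show "{\<omega> \<in> space M. \<not> (hit_time X b \<omega> < \<infinity> \<longleftrightarrow> \<omega> \<in> C_zero M X b \<union> J_plus M X b)} \<subseteq> C_plus M X b \<union> J_zero M X b"
  proof (rule subsetI, rule ccontr)
    fix \<omega> assume a: "\<omega> \<in> {\<omega> \<in> space M. \<not> (hit_time X b \<omega> < \<infinity> \<longleftrightarrow> \<omega> \<in> C_zero M X b \<union> J_plus M X b)}"
      and n: "\<omega> \<notin> C_plus M X b \<union> J_zero M X b"
    have w: "\<omega> \<in> space M" using a by simp
    have "\<omega> \<in> C_zero M X b \<union> J_plus M X b \<Longrightarrow> hit_time X b \<omega> < \<infinity>"
      by (auto simp: C_zero_def J_plus_def)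
    hence fin: "hit (Yw \<omega>) < \<infinity>" and nCJ: "\<omega> \<notin> C_zero M X b \<union> J_plus M X b" using a by (auto simp: hit_time_eq)
    interpret cpath "Yw \<omega>" by (rule cpath[OF w])
    obtain r where r: "hit (Yw \<omega>) = ereal r" "0 < r" "0 \<le> Yw \<omega> r" using fin by (rule hit_fin)
    have le: "left_lim (Yw \<omega>) r \<le> 0" by (rule hit_llim_le0[OF r(1,2)])
    have tm: "Y_tau_minus X b \<omega> = left_lim (Yw \<omega>) r" and tt: "Y_tau X b \<omega> = Yw \<omega> r" using r by (simp_all add: Ytm Yt)
    have hf: "hit_time X b \<omega> < \<infinity>" using fin by (simp add: hit_time_eq)
    show False using n nCJ w hf tm tt le r(3)
      unfolding C_plus_def J_zero_def C_zero_def J_plus_def by auto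
  qed
qed

lemma R4: "C_zero M X b \<inter> J_plus M X b = {}"
  unfolding C_zero_def J_plus_def by auto

end



context setting
begin

definition Sst :: "'a \<Rightarrow> ereal" where "Sst \<omega> = (if Dset \<omega> then hs (Yw \<omega>) else \<infinity>)"

lemma hn_lt_hs_set:
  assumes t: "t \<ge> 0"
  shows "{\<omega>\<in>space M. hn (Yw \<omega>) n < hs (Yw \<omega>) \<and> hs (Yw \<omega>) \<le> ereal t} \<in> sets (F t)"
proof -
  have "{\<omega>\<in>space M. hn (Yw \<omega>) n < hs (Yw \<omega>) \<and> hs (Yw \<omega>) \<le> ereal t} =
    (\<Union>q\<in>\<rat>\<inter>{0..t}. {\<omega>\<in>space M. hn (Yw \<omega>) n \<le> ereal q} \<inter> (space M - {\<omega>\<in>space M. hs (Yw \<omega>) \<le> ereal q})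
       \<inter> {\<omega>\<in>space M. hs (Yw \<omega>) \<le> ereal t})"
  proof (intro set_eqI iffI)
    fix \<omega> assume "\<omega> \<in> {\<omega>\<in>space M. hn (Yw \<omega>) n < hs (Yw \<omega>) \<and> hs (Yw \<omega>) \<le> ereal t}"
    hence w: "\<omega> \<in> space M" and lt: "hn (Yw \<omega>) n < hs (Yw \<omega>)" and le: "hs (Yw \<omega>) \<le> ereal t" by auto
    obtain h where h: "hs (Yw \<omega>) = ereal h" using le hs_ge0[of "Yw \<omega>"] by (cases "hs (Yw \<omega>)") auto
    obtain a where a: "hn (Yw \<omega>) n = ereal a" "0 \<le> a" using lt h hn_ge0[of "Yw \<omega>" n] by (cases "hn (Yw \<omega>) n") auto
    have ah: "a < h" using lt a h by simp
    obtain q where q: "q \<in> \<rat>" "a < q" "q < h" using Rats_dense_in_real[OF ah] by blast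
    have ht: "h \<le> t" using le h by simp
    show "\<omega> \<in> (\<Union>q\<in>\<rat>\<inter>{0..t}. {\<omega>\<in>space M. hn (Yw \<omega>) n \<le> ereal q} \<inter> (space M - {\<omega>\<in>space M. hs (Yw \<omega>) \<le> ereal q})
       \<inter> {\<omega>\<in>space M. hs (Yw \<omega>) \<le> ereal t})"
      using q a h ht w le by (intro UN_I[of q]) auto
  next
    fix \<omega> assume "\<omega> \<in> (\<Union>q\<in>\<rat>\<inter>{0..t}. {\<omega>\<in>space M. hn (Yw \<omega>) n \<le> ereal q} \<inter> (space M - {\<omega>\<in>space M. hs (Yw \<omega>) \<le> ereal q})
       \<inter> {\<omega>\<in>space M. hs (Yw \<omega>) \<le> ereal t})"
    then obtain q where w: "\<omega> \<in> space M" and q1: "hn (Yw \<omega>) n \<le> ereal q" and q2: "\<not> hs (Yw \<omega>) \<le> ereal q"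
      and le: "hs (Yw \<omega>) \<le> ereal t" by auto
    have "hn (Yw \<omega>) n < hs (Yw \<omega>)" using q1 q2 by (simp add: not_le le_less_trans)
    thus "\<omega> \<in> {\<omega>\<in>space M. hn (Yw \<omega>) n < hs (Yw \<omega>) \<and> hs (Yw \<omega>) \<le> ereal t}" using w le by simp
  qed
  also have "\<dots> \<in> sets (F t)"
  proof (rule sets.countable_UN'')
    show "countable (\<rat>\<inter>{0..t})" by (rule countable_Rats_Int)
    fix q assume q: "q \<in> \<rat>\<inter>{0..t}"
    have q0: "0 \<le> q" and qt: "q \<le> t" using q by auto
    have 1: "{\<omega>\<in>space M. hn (Yw \<omega>) n \<le> ereal q} \<in> sets (F t)" using hn_le_Ft[OF q0] Fmono[OF q0 qt] by auto
    have "{\<omega>\<in>space M. hs (Yw \<omega>) \<le> ereal q} \<in> sets (F t)" using hs_le_Ft[OF q0] Fmono[OF q0 qt] by auto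
    hence 2: "space M - {\<omega>\<in>space M. hs (Yw \<omega>) \<le> ereal q} \<in> sets (F t)"
      using sets.compl_sets[of _ "F t"] spF[OF t] by metis
    have 3: "{\<omega>\<in>space M. hs (Yw \<omega>) \<le> ereal t} \<in> sets (F t)" by (rule hs_le_Ft[OF t])
    show "{\<omega>\<in>space M. hn (Yw \<omega>) n \<le> ereal q} \<inter> (space M - {\<omega>\<in>space M. hs (Yw \<omega>) \<le> ereal q})
       \<inter> {\<omega>\<in>space M. hs (Yw \<omega>) \<le> ereal t} \<in> sets (F t)" using 1 2 3 by (intro sets.Int)
  qed
  finally show ?thesis .
qed

lemma Sst_stop: "stopping_time_e M F Sst"
  unfolding stopping_time_e_def
proof (intro conjI ballI allI impI)
  fix \<omega> show "0 \<le> Sst \<omega>" unfolding Sst_def using hs_ge0[of "Yw \<omega>"] by simp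
next
  fix t :: real assume t: "0 \<le> t"
  have "{\<omega>\<in>space M. Sst \<omega> \<le> ereal t} = {\<omega>\<in>space M. hs (Yw \<omega>) \<le> ereal t} \<inter>
      (\<Inter>n. {\<omega>\<in>space M. hn (Yw \<omega>) n < hs (Yw \<omega>) \<and> hs (Yw \<omega>) \<le> ereal t})"
    unfolding Sst_def Dset_def by (auto split: if_splits)
  also have "\<dots> \<in> sets (F t)"
    using hs_le_Ft[OF t] hn_lt_hs_set[OF t] by (intro sets.Int sets.countable_INT) auto
  finally show "{\<omega>\<in>space M. Sst \<omega> \<le> ereal t} \<in> sets (F t)" .
qed

definition from_t :: "('a \<Rightarrow> ereal) \<Rightarrow> ('a \<times> real) set" where
  "from_t T = {(\<omega>, t). \<omega> \<in> space M \<and> 0 \<le> t \<and> T \<omega> \<le> ereal t}"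

lemma Sst_P: "from_t Sst \<in> sets P"
proof -
  have "from_t Sst = (\<Union>k. Gk k) \<union> afterP Sst"
  proof (intro set_eqI iffI)
    fix z assume z: "z \<in> from_t Sst"
    obtain \<omega> t where zz: "z = (\<omega>, t)" by (cases z)
    have w: "\<omega> \<in> space M" and t: "0 \<le> t" and le: "Sst \<omega> \<le> ereal t" using z zz by (auto simp: from_t_def)
    show "z \<in> (\<Union>k. Gk k) \<union> afterP Sst"
    proof (cases "Sst \<omega> < ereal t")
      case True thus ?thesis using w t zz by (simp add: afterP_def)
    next
      case False
      hence eq: "Sst \<omega> = ereal t" using le by simp
      hence D: "Dset \<omega>" and hs: "hs (Yw \<omega>) = ereal t" unfolding Sst_def by (auto split: if_splits)
      obtain k :: nat where "t \<le> real k" using exk by blast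
      hence "(\<omega>, t) \<in> Gk k" using Gk_char w D hs by simp
      thus ?thesis using zz by blast
    qed
  next
    fix z assume z: "z \<in> (\<Union>k. Gk k) \<union> afterP Sst"
    obtain \<omega> t where zz: "z = (\<omega>, t)" by (cases z)
    show "z \<in> from_t Sst"
    proof (cases "z \<in> afterP Sst")
      case True thus ?thesis using zz by (auto simp: afterP_def from_t_def)
    next
      case False
      then obtain k where "(\<omega>, t) \<in> Gk k" using z zz by auto
      hence w: "\<omega> \<in> space M" and D: "Dset \<omega>" and hs: "hs (Yw \<omega>) = ereal t" using Gk_char by auto
      have "0 \<le> t" using hs hs_ge0[of "Yw \<omega>"] by simp
      thus ?thesis using zz w D hs by (simp add: from_t_def Sst_def)
    qed
  qed
  also have "\<dots> \<in> sets P" using Gk_P afterP_P[OF Sst_stop] by auto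
  finally show ?thesis .
qed

lemma F0_time_P:
  assumes T: "\<And>q. {\<omega>\<in>space M. T \<omega> \<le> ereal q} \<in> sets (F 0)"
  shows "from_t T \<in> sets P"
proof -
  have "from_t T = (\<Inter>m::nat. \<Union>q\<in>\<rat>. {\<omega>\<in>space M. T \<omega> \<le> ereal q} \<times> ({0..} \<inter> {q - 1 / (real m + 1)<..}))"
  proof (intro set_eqI iffI)
    fix z assume z: "z \<in> from_t T"
    obtain \<omega> t where zz: "z = (\<omega>, t)" by (cases z)
    have w: "\<omega> \<in> space M" and t: "0 \<le> t" and le: "T \<omega> \<le> ereal t" using z zz by (auto simp: from_t_def)
    show "z \<in> (\<Inter>m::nat. \<Union>q\<in>\<rat>. {\<omega>\<in>space M. T \<omega> \<le> ereal q} \<times> ({0..} \<inter> {q - 1 / (real m + 1)<..}))"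
    proof (rule INT_I)
      fix m :: nat
      have "t < t + 1 / (real m + 1)" by simp
      then obtain q where q: "q \<in> \<rat>" "t < q" "q < t + 1 / (real m + 1)" using Rats_dense_in_real by blast
      have "T \<omega> \<le> ereal q" using le q(2) by (meson ereal_less_eq(3) less_imp_le order.trans)
      moreover have "q - 1 / (real m + 1) < t" using q(3) by simp
      ultimately show "z \<in> (\<Union>q\<in>\<rat>. {\<omega>\<in>space M. T \<omega> \<le> ereal q} \<times> ({0..} \<inter> {q - 1 / (real m + 1)<..}))"
        using q(1) w t zz by (intro UN_I[of q]) auto
    qed
  next
    fix z assume z: "z \<in> (\<Inter>m::nat. \<Union>q\<in>\<rat>. {\<omega>\<in>space M. T \<omega> \<le> ereal q} \<times> ({0..} \<inter> {q - 1 / (real m + 1)<..}))"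
    obtain \<omega> t where zz: "z = (\<omega>, t)" by (cases z)
    have H: "\<forall>m::nat. \<exists>q. \<omega> \<in> space M \<and> T \<omega> \<le> ereal q \<and> 0 \<le> t \<and> q - 1 / (real m + 1) < t"
      using z zz by blast
    then obtain q0 where "\<omega> \<in> space M" "0 \<le> t" by blast
    moreover have "T \<omega> \<le> ereal t"
    proof (rule ccontr)
      assume "\<not> T \<omega> \<le> ereal t"
      hence gt: "ereal t < T \<omega>" by simp
      show False
      proof (cases "T \<omega>")
        case (real a)
        hence at: "t < a" using gt by simp
        obtain m :: nat where m: "inverse (real (Suc m)) < a - t" using reals_Archimedean[of "a - t"] at by auto
        obtain q where q: "T \<omega> \<le> ereal q" "q - 1 / (real m + 1) < t" using H by blast
        have "a \<le> q" using q(1) real by simp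
        moreover have "1 / (real m + 1) = inverse (real (Suc m))" by (simp add: inverse_eq_divide)
        ultimately show False using q(2) m by linarith
      next
        case PInf
        obtain q where "T \<omega> \<le> ereal q" using H by blast
        thus False using PInf by simp
      next
        case MInf thus False using gt by simp
      qed
    qed
    ultimately show "z \<in> from_t T" using zz by (simp add: from_t_def)
  qed
  also have "\<dots> \<in> sets P"
  proof (rule sets.countable_INT, rule image_subsetI)
    fix m :: nat
    show "(\<Union>q\<in>\<rat>. {\<omega>\<in>space M. T \<omega> \<le> ereal q} \<times> ({0..} \<inter> {q - 1 / (real m + 1)<..})) \<in> sets P"
    proof (rule sets.countable_UN'')
      show "countable (\<rat> :: real set)" by (rule countable_rat)
      fix q :: real
      show "{\<omega>\<in>space M. T \<omega> \<le> ereal q} \<times> ({0..} \<inter> {q - 1 / (real m + 1)<..}) \<in> sets P"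
        by (rule genP5[OF T])
    qed
  qed simp
  finally show ?thesis .
qed

end



context setting
begin

lemma eqS:
  assumes w: "\<omega> \<in> space M" and np: "\<omega> \<notin> prem"
  shows "tau_L M X b \<omega> = Sst \<omega>"
proof -
  have eq: "hs (Yw \<omega>) = hit (Yw \<omega>)" by (rule not_prem_eq[OF w np])
  interpret cpath "Yw \<omega>" by (rule cpath[OF w])
  show ?thesis
  proof (cases "\<omega> \<in> L_set M X b")
    case True
    hence fin: "hit (Yw \<omega>) < \<infinity>" and tm: "Y_tau_minus X b \<omega> = 0" by (auto simp: L_set_def hit_time_eq)
    obtain r where r: "hit (Yw \<omega>) = ereal r" "0 < r" "0 \<le> Yw \<omega> r" using fin by (rule hit_fin)
    have ll: "left_lim (Yw \<omega>) r = 0" using tm r by (simp add: Ytm)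
    have "\<forall>n. hn (Yw \<omega>) n < hs (Yw \<omega>)" using K4[OF r(1,2) ll] eq by simp
    hence D: "Dset \<omega>" using eq r unfolding Dset_def by simp
    show ?thesis using True D eq by (simp add: tau_L_def Sst_def hit_time_eq)
  next
    case False
    have "\<not> Dset \<omega>"
    proof
      assume D: "Dset \<omega>"
      have ll: "left_lim (Yw \<omega>) (rr \<omega>) = 0" using hit_eq_pw[OF w D] by simp
      have hr: "hit (Yw \<omega>) = ereal (rr \<omega>)" using Dset_fin[OF D] eq by simp
      have "\<omega> \<in> L_set M X b" using w hr ll by (simp add: L_set_def hit_time_eq Ytm)
      thus False using False by simp
    qed
    thus ?thesis using False by (simp add: tau_L_def Sst_def)
  qed
qed

lemma tauL_pred:
  assumes pn: "prem \<in> null_sets M"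
  shows "predictable_time M F (tau_L M X b)"
proof -
  define Rt where "Rt \<omega> = (if \<omega> \<in> prem then tau_L M X b \<omega> else \<infinity>)" for \<omega>
  have prem0: "prem \<in> sets (F 0)" using pn nullF0 by auto
  have Rt0: "{\<omega>\<in>space M. Rt \<omega> \<le> ereal q} \<in> sets (F 0)" for q
  proof -
    have "{\<omega>\<in>space M. Rt \<omega> \<le> ereal q} \<subseteq> prem" by (auto simp: Rt_def split: if_splits)
    hence "{\<omega>\<in>space M. Rt \<omega> \<le> ereal q} \<in> null_sets M" using pn by (rule cm)
    thus ?thesis using nullF0 by auto
  qed
  have cprem0: "space M - prem \<in> sets (F 0)"
    using sets.compl_sets[OF prem0] spF[of 0] by simp
  have tau0: "0 \<le> tau_L M X b \<omega>" for \<omega>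
    unfolding tau_L_def hit_time_eq using hit_ge0[of "Yw \<omega>"] by simp
  have stop: "stopping_time_e M F (tau_L M X b)"
    unfolding stopping_time_e_def
  proof (intro conjI ballI allI impI)
    fix \<omega> show "0 \<le> tau_L M X b \<omega>" by (rule tau0)
  next
    fix t :: real assume t: "0 \<le> t"
    have "{\<omega>\<in>space M. tau_L M X b \<omega> \<le> ereal t} =
      ({\<omega>\<in>space M. Sst \<omega> \<le> ereal t} \<inter> (space M - prem)) \<union> {\<omega>\<in>space M. Rt \<omega> \<le> ereal t}"
      using eqS by (auto simp: Rt_def split: if_splits)
    also have "\<dots> \<in> sets (F t)"
    proof (intro sets.Un sets.Int)
      show "{\<omega>\<in>space M. Sst \<omega> \<le> ereal t} \<in> sets (F t)" using Sst_stop t by (simp add: stopping_time_e_def)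
      show "space M - prem \<in> sets (F t)" using cprem0 Fmono[of 0 t] t by auto
      show "{\<omega>\<in>space M. Rt \<omega> \<le> ereal t} \<in> sets (F t)" using Rt0 Fmono[of 0 t] t by auto
    qed
    finally show "{\<omega>\<in>space M. tau_L M X b \<omega> \<le> ereal t} \<in> sets (F t)" .
  qed
  have "from_t (tau_L M X b) = (from_t Sst \<inter> ((space M - prem) \<times> {0..})) \<union> from_t Rt"
    using eqS by (auto simp: from_t_def Rt_def split: if_splits)
  also have "\<dots> \<in> sets P"
    using Sst_P genP4[OF cprem0] F0_time_P[OF Rt0] by (intro sets.Un sets.Int)
  finally have "from_t (tau_L M X b) \<in> sets P" .
  thus ?thesis using stop unfolding predictable_time_def from_t_def by simp
qed

lemma Jplus_sigma:
  assumes npj: "{\<omega>\<in>space M. \<sigma> \<omega> < \<infinity> \<and> jump (\<lambda>t. X t \<omega>) (real_of_ereal (\<sigma> \<omega>)) \<noteq> 0} \<in> null_sets M"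
  shows "{\<omega>\<in>J_plus M X b. hit_time X b \<omega> = \<sigma> \<omega>} \<in> null_sets M"
proof (rule cm[OF _ npj])
  show "{\<omega>\<in>J_plus M X b. hit_time X b \<omega> = \<sigma> \<omega>} \<subseteq> {\<omega>\<in>space M. \<sigma> \<omega> < \<infinity> \<and> jump (\<lambda>t. X t \<omega>) (real_of_ereal (\<sigma> \<omega>)) \<noteq> 0}"
  proof
    fix \<omega> assume a: "\<omega> \<in> {\<omega>\<in>J_plus M X b. hit_time X b \<omega> = \<sigma> \<omega>}"
    hence w: "\<omega> \<in> space M" and fin: "hit (Yw \<omega>) < \<infinity>" and tm: "Y_tau_minus X b \<omega> < 0"
      and tp: "0 < Y_tau X b \<omega>" and s: "hit (Yw \<omega>) = \<sigma> \<omega>" by (auto simp: J_plus_def hit_time_eq)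
    interpret cpath "Yw \<omega>" by (rule cpath[OF w])
    obtain r where r: "hit (Yw \<omega>) = ereal r" "0 < r" "0 \<le> Yw \<omega> r" using fin by (rule hit_fin)
    have "jump (\<lambda>t. X t \<omega>) r = Yw \<omega> r - left_lim (Yw \<omega>) r" by (rule jump_Y[OF w r(2)])
    moreover have "left_lim (Yw \<omega>) r < 0" "0 < Yw \<omega> r" using tm tp r by (simp_all add: Ytm Yt)
    ultimately have "jump (\<lambda>t. X t \<omega>) r \<noteq> 0" by simp
    show "\<omega> \<in> {\<omega>\<in>space M. \<sigma> \<omega> < \<infinity> \<and> jump (\<lambda>t. X t \<omega>) (real_of_ereal (\<sigma> \<omega>)) \<noteq> 0}"
    proof -
      have sr: "\<sigma> \<omega> = ereal r" using s r(1) by simp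
      show ?thesis using w sr \<open>jump (\<lambda>t. X t \<omega>) r \<noteq> 0\<close> by simp
    qed
  qed
qed

end

theorem corollary3p10:
  fixes M :: "'a measure" and F :: "real \<Rightarrow> 'a measure"
    and X :: "real \<Rightarrow> 'a \<Rightarrow> real" and b :: "real \<Rightarrow> real"
    and \<nu> :: "'a \<Rightarrow> (real \<times> real) measure"
  assumes filt: "usual_filtration M F"
    and semi: "semimartingale M F X"
    and b_cont: "continuous_on {0..} b"
    and start: "\<forall>\<omega>\<in>space M. X 0 \<omega> < b 0"
    and comp: "compensator M F X \<nu>"
    and h1: "AE \<omega> in M. \<forall>t\<ge>0. ind_integral \<nu> (Gamma_minus X b) t \<omega> = 0"
    and h2: "AE \<omega> in M. \<forall>t\<ge>0. ind_integral \<nu> (Gamma_plus X b) t \<omega> = 0"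
    and h3: "AE \<omega> in M. \<forall>t\<ge>0. ind_integral \<nu> (Gamma_zero X b) t \<omega> = 0"
  shows "(AE \<omega> in M. \<forall>t\<ge>0. ereal t < hit_time X b \<omega> \<longrightarrow> (SUP s\<in>{0..t}. Yp X b s \<omega>) < 0)
    \<and> C_plus M X b \<in> null_sets M
    \<and> J_zero M X b \<in> null_sets M
    \<and> C_zero M X b \<inter> J_plus M X b = {}
    \<and> (AE \<omega> in M. hit_time X b \<omega> < \<infinity> \<longleftrightarrow> \<omega> \<in> C_zero M X b \<union> J_plus M X b)
    \<and> ((\<forall>\<sigma>. predictable_time M F \<sigma> \<longrightarrow>
          {\<omega>\<in>space M. \<sigma> \<omega> < \<infinity> \<and> jump (\<lambda>t. X t \<omega>) (real_of_ereal (\<sigma> \<omega>)) \<noteq> 0} \<in> null_sets M)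
        \<longrightarrow> predictable_time M F (tau_L M X b) \<and>
            (\<forall>\<sigma>. predictable_time M F \<sigma> \<longrightarrow>
               {\<omega>\<in>J_plus M X b. hit_time X b \<omega> = \<sigma> \<omega>} \<in> null_sets M))"
proof -
  have adX: "adapted M F X" and cadX: "cadlag_process M X" using semi by (simp_all add: semimartingale_def)
  interpret S: setting M F X b \<nu> using filt adX cadX b_cont start comp by unfold_locales
  have pn: "S.prem \<in> null_sets M" by (rule S.prem_null[OF h1])
  show ?thesis
  proof (intro conjI impI allI)
    show "AE \<omega> in M. \<forall>t\<ge>0. ereal t < hit_time X b \<omega> \<longrightarrow> (SUP s\<in>{0..t}. Yp X b s \<omega>) < 0"
      by (rule S.R1[OF h1])
    show "C_plus M X b \<in> null_sets M" by (rule S.R2[OF h1 h2])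
    show "J_zero M X b \<in> null_sets M" by (rule S.R3[OF h1 h3])
    show "C_zero M X b \<inter> J_plus M X b = {}" by (rule S.R4)
    show "AE \<omega> in M. hit_time X b \<omega> < \<infinity> \<longleftrightarrow> \<omega> \<in> C_zero M X b \<union> J_plus M X b"
      by (rule S.R5[OF h1 h2 h3])
    show "predictable_time M F (tau_L M X b)" by (rule S.tauL_pred[OF pn])
  next
    fix \<sigma>
    assume H: "\<forall>\<sigma>. predictable_time M F \<sigma> \<longrightarrow>
          {\<omega>\<in>space M. \<sigma> \<omega> < \<infinity> \<and> jump (\<lambda>t. X t \<omega>) (real_of_ereal (\<sigma> \<omega>)) \<noteq> 0} \<in> null_sets M"
      and p: "predictable_time M F \<sigma>"
    show "{\<omega>\<in>J_plus M X b. hit_time X b \<omega> = \<sigma> \<omega>} \<in> null_sets M"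
      using H p by (intro S.Jplus_sigma) blast
  qed
qed

end
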